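(* Let $D$ be a $\Lambda^+$-valued divisor on $\mathbb{P}^1$ satisfying the integrality assumption, and let $T_D(z)$ be the associated rational Lax matrix. Then the normalized matrix $\mathsf{T}_D(z):=Z_0(z)^{-1}T_D(z)$ has all its entries in $\mathcal{A}[z]$, i.e. $\mathsf{T}_D(z)\in\mathcal{A}[z]\otimes_{\mathbb{C}}\mathrm{End}\,\mathbb{C}^n$.
   Context: Let $n\ge2$, $\Lambda=\bigoplus_{j=1}^n\mathbb{Z}\epsilon_j$, $\epsilon^\vee_j$ dual basis, $\alpha^\vee_i=\epsilon^\vee_i-\epsilon^\vee_{i+1}$, $\alpha_i=\epsilon_i-\epsilon_{i+1}$, $\varpi_i=-\sum_{j=i+1}^n\epsilon_j$ ($0\le i\le n-1$), $\Lambda^+=\{\nu:\alpha^\vee_i(\nu)\ge0,\ 1\le i<n\}$. A $\Lambda^+$-valued divisor is $D=\sum_{s=1}^N\gamma_s\varpi_{i_s}[x_s]+\mu[\infty]$ with $0\le i_s\le n-1$, $x_s\in\mathbb{C}$, $\gamma_s=1$ if $i_s\ne0$, $\gamma_s\in\{\pm1\}$ if $i_s=0$, and $\mu\in\Lambda^+$. Integrality assumption: with $\lambda=\sum_s\gamma_s\varpi_{i_s}$, $\lambda+\mu=\sum_{i=1}^{n-1}a_i\alpha_i$ with $a_i\in\mathbb{Z}_{\ge0}$; $a_0=a_n=0$. $\mathcal{A}$: the $\mathbb{C}$-algebra generated by $p_{i,r},e^{\pm q_{i,r}},(p_{i,r}-p_{i,s}+m)^{-1}$ ($1\le i<n$,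 $1\le r\ne s\le a_i$, $m\in\mathbb{Z}$) with relations $[e^{\pm q_{i,r}},p_{j,s}]=\mp\delta_{ij}\delta_{rs}e^{\pm q_{i,r}}$, the $p$'s pairwise commute, the $e^{q}$'s pairwise commute, $e^{\pm q_{i,r}}e^{\mp q_{i,r}}=1$. $Z_i(z)=\prod_{s:i_s=i}(z-x_s)^{\gamma_s}$, $P_j(z)=\prod_{r=1}^{a_j}(z-p_{j,r})$, $P_{j,r}(z)=\prod_{s\ne r}(z-p_{j,s})$, $P_0=P_n=1$. Rational Lax matrix: define elements of $\mathcal{A}((z^{-1}))$ (rational expressions expanded in $z^{-1}$): $g^D_i(z)=\frac{P_i(z)}{P_{i-1}(z-1)}\prod_{k=0}^{i-1}Z_k(z)$; for $i<j$, $e^D_{ij}(z)=-\sum_{r_i,\dots,r_{j-1}}\frac{P_{i-1}(p_{i,r_i}-1)\prod_{k=i}^{j-2}P_{k,r_k}(p_{k+1,r_{k+1}}-1)}{(z-p_{i,r_i})\prod_{k=i}^{j-1}P_{k,r_k}(p_{k,r_k})}\prod_{k=i}^{j-1}Z_k(p_{k,r_k})\cdot e^{\sum_{k=i}^{j-1}q_{k,r_k}}$, $f^D_{ji}(z)=\sum_{r_i,\dots,r_{j-1}}\frac{P_j(p_{j-1,r_{j-1}}+1)\prod_{k=i+1}^{j-1}P_{k,r_k}(p_{k-1,r_{k-1}}+1)}{(z-p_{i,r_i}-1)\prod_{k=i}^{j-1}P_{k,r_k}(p_{k,r_k})}\cdot e^{-\sum_{k=i}^{j-1}q_{k,r_k}}$,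 sums over $1\le r_k\le a_k$; $e^D_{ii}=f^D_{ii}=1$. Then $T_D(z)_{\alpha\beta}:=\sum_{i=1}^{\min(\alpha,\beta)}f^D_{\alpha i}(z)g^D_i(z)e^D_{i\beta}(z)$. *)

theory Defs
  imports Complex_Main "HOL-Library.FuncSet"
begin

text \<open>
Model of the algebra A (with rational dependence on the spectral parameter z).
The generators p_{i,r} are coordinates of pvar = (nat x nat => complex), indexed by (i,r).
A general element of A is a finite sum of terms c(p) e^{s.q} (coefficient on the left) with
s an integer vector (a shift). The relation [e^{q_{i,r}}, p_{i,r}] = - e^{q_{i,r}} means
e^{s.q} d(p) = d(p - s) e^{s.q}; this is the twisted product tmul below.
\<close>

type_synonym pvar = "nat \<times> nat \<Rightarrow> complex"
type_synonym shift = "nat \<times> nat \<Rightarrow> int"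
type_synonym coef = "complex \<Rightarrow> pvar \<Rightarrow> complex"

text \<open>A divisor: list of points (i_s, gamma_s, x_s); mu is given separately.\<close>
type_synonym divisor_pts = "(nat \<times> int \<times> complex) list"

definition Zf :: "divisor_pts \<Rightarrow> nat \<Rightarrow> complex \<Rightarrow> complex" where
  "Zf Ds k z = prod_list (map (\<lambda>(i, g, x). if i = k then (z - x) powi g else 1) Ds)"

text \<open>The weight lambda = sum_s gamma_s varpi_{i_s}, component j (coefficient of eps_j).\<close>
definition lam :: "divisor_pts \<Rightarrow> nat \<Rightarrow> int" where
  "lam Ds j = - sum_list (map (\<lambda>(i, g, x). if i < j then g else 0) Ds)"

definition Pp :: "(nat \<Rightarrow> nat) \<Rightarrow> nat \<Rightarrow> pvar \<Rightarrow> complex \<Rightarrow> complex" where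
  "Pp a j p z = (\<Prod>r\<in>{1..a j}. z - p (j, r))"

definition Ppr :: "(nat \<Rightarrow> nat) \<Rightarrow> nat \<Rightarrow> nat \<Rightarrow> pvar \<Rightarrow> complex \<Rightarrow> complex" where
  "Ppr a j r p z = (\<Prod>s\<in>{1..a j} - {r}. z - p (j, s))"

definition tuples :: "(nat \<Rightarrow> nat) \<Rightarrow> nat \<Rightarrow> nat \<Rightarrow> (nat \<Rightarrow> nat) set" where
  "tuples a i j = PiE {i..<j} (\<lambda>k. {1..a k})"

text \<open>The shift vector of e^{sum_{k=i}^{j-1} q_{k,r_k}}.\<close>
definition qsum :: "nat \<Rightarrow> nat \<Rightarrow> (nat \<Rightarrow> nat) \<Rightarrow> shift" where
  "qsum i j r = (\<lambda>v. \<Sum>k\<in>{i..<j}. if v = (k, r k) then 1 else 0)"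

definition tmul :: "coef \<times> shift \<Rightarrow> coef \<times> shift \<Rightarrow> coef \<times> shift" where
  "tmul cs dt = (case cs of (c, s) \<Rightarrow> case dt of (d, t) \<Rightarrow>
      ((\<lambda>z p. c z p * d z (\<lambda>v. p v - of_int (s v))), (\<lambda>v. s v + t v)))"

definition eterm :: "divisor_pts \<Rightarrow> (nat \<Rightarrow> nat) \<Rightarrow> nat \<Rightarrow> nat \<Rightarrow> (nat \<Rightarrow> nat) \<Rightarrow> coef \<times> shift" where
  "eterm Ds a i j r = (if i = j then ((\<lambda>z p. 1), (\<lambda>v. 0)) else
     ((\<lambda>z p. - (Pp a (i - 1) p (p (i, r i) - 1)
                 * (\<Prod>k\<in>{i..<j - 1}. Ppr a k (r k) p (p (k + 1, r (k + 1)) - 1)))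
               / ((z - p (i, r i)) * (\<Prod>k\<in>{i..<j}. Ppr a k (r k) p (p (k, r k))))
               * (\<Prod>k\<in>{i..<j}. Zf Ds k (p (k, r k)))),
      qsum i j r))"

definition fterm :: "(nat \<Rightarrow> nat) \<Rightarrow> nat \<Rightarrow> nat \<Rightarrow> (nat \<Rightarrow> nat) \<Rightarrow> coef \<times> shift" where
  "fterm a j i r = (if i = j then ((\<lambda>z p. 1), (\<lambda>v. 0)) else
     ((\<lambda>z p. (Pp a j p (p (j - 1, r (j - 1)) + 1)
                 * (\<Prod>k\<in>{i + 1..<j}. Ppr a k (r k) p (p (k - 1, r (k - 1)) + 1)))
               / ((z - p (i, r i) - 1) * (\<Prod>k\<in>{i..<j}. Ppr a k (r k) p (p (k, r k))))),
      (\<lambda>v. - qsum i j r v)))"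

definition gterm :: "divisor_pts \<Rightarrow> (nat \<Rightarrow> nat) \<Rightarrow> nat \<Rightarrow> coef \<times> shift" where
  "gterm Ds a i = ((\<lambda>z p. Pp a i p z / Pp a (i - 1) p (z - 1) * (\<Prod>k<i. Zf Ds k z)), (\<lambda>v. 0))"

text \<open>Coefficient of e^{k.q} in T_D(z)_{alpha beta} = sum_i f_{alpha i} g_i e_{i beta}.\<close>
definition Tcoeff :: "divisor_pts \<Rightarrow> (nat \<Rightarrow> nat) \<Rightarrow> nat \<Rightarrow> nat \<Rightarrow> shift \<Rightarrow> coef" where
  "Tcoeff Ds a \<alpha> \<beta> k = (\<lambda>z p. \<Sum>i\<in>{1..min \<alpha> \<beta>}. \<Sum>r\<in>tuples a i \<alpha>. \<Sum>r'\<in>tuples a i \<beta>.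
      (case tmul (tmul (fterm a \<alpha> i r) (gterm Ds a i)) (eterm Ds a i \<beta> r') of
         (c, s) \<Rightarrow> if s = k then c z p else 0))"

inductive_set polyfun :: "nat \<Rightarrow> (nat \<Rightarrow> nat) \<Rightarrow> (pvar \<Rightarrow> complex) set" for n a where
  const: "(\<lambda>p. c) \<in> polyfun n a"
| var: "1 \<le> i \<Longrightarrow> i < n \<Longrightarrow> 1 \<le> r \<Longrightarrow> r \<le> a i \<Longrightarrow> (\<lambda>p. p (i, r)) \<in> polyfun n a"
| add: "P \<in> polyfun n a \<Longrightarrow> Q \<in> polyfun n a \<Longrightarrow> (\<lambda>p. P p + Q p) \<in> polyfun n a"
| mult: "P \<in> polyfun n a \<Longrightarrow> Q \<in> polyfun n a \<Longrightarrow> (\<lambda>p. P p * Q p) \<in> polyfun n a"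

definition valid_den :: "nat \<Rightarrow> (nat \<Rightarrow> nat) \<Rightarrow> nat \<times> nat \<times> nat \<times> int \<Rightarrow> bool" where
  "valid_den n a d = (case d of (i, r, s, m) \<Rightarrow>
      1 \<le> i \<and> i < n \<and> r \<in> {1..a i} \<and> s \<in> {1..a i} \<and> r \<noteq> s)"

definition generic :: "nat \<Rightarrow> (nat \<Rightarrow> nat) \<Rightarrow> pvar \<Rightarrow> bool" where
  "generic n a p = (\<forall>i r s m. valid_den n a (i, r, s, m) \<longrightarrow> p (i, r) - p (i, s) + of_int m \<noteq> 0)"

text \<open>The commutative subalgebra C[p_{i,r}, (p_{i,r}-p_{i,s}+m)^{-1}] of A (as functions on generic points).\<close>
definition locring :: "nat \<Rightarrow> (nat \<Rightarrow> nat) \<Rightarrow> (pvar \<Rightarrow> complex) set" where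
  "locring n a = {c. \<exists>P\<in>polyfun n a. \<exists>ds. (\<forall>d\<in>set ds. valid_den n a d) \<and>
      (\<forall>p. generic n a p \<longrightarrow>
         c p = P p / prod_list (map (\<lambda>(i, r, s, m). p (i, r) - p (i, s) + of_int m) ds))}"

end

theory Submission
  imports Defs "HOL-Computational_Algebra.Polynomial" "HOL-Library.Function_Algebras"
begin


definition pshift :: "shift \<Rightarrow> pvar \<Rightarrow> pvar" where
  "pshift s p = (\<lambda>v. p v - of_int (s v))"

definition dval :: "pvar \<Rightarrow> nat \<times> nat \<times> nat \<times> int \<Rightarrow> complex" where
  "dval p d = (case d of (i, r, s, m) \<Rightarrow> p (i, r) - p (i, s) + of_int m)"

context fixes n :: nat and a :: "nat \<Rightarrow> nat"
begin

lemma pf_minus: "P \<in> polyfun n a \<Longrightarrow> (\<lambda>p. - P p) \<in> polyfun n a"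
  using polyfun.mult[OF polyfun.const[of "-1"], of P] by simp

lemma pf_diff: "P \<in> polyfun n a \<Longrightarrow> Q \<in> polyfun n a \<Longrightarrow> (\<lambda>p. P p - Q p) \<in> polyfun n a"
  using polyfun.add[OF _ pf_minus] by (simp add: algebra_simps)

lemma pf_sum: "finite A \<Longrightarrow> (\<And>x. x \<in> A \<Longrightarrow> f x \<in> polyfun n a) \<Longrightarrow> (\<lambda>p. \<Sum>x\<in>A. f x p) \<in> polyfun n a"
proof (induction A rule: finite_induct)
  case empty then show ?case using polyfun.const[of 0] by simp
next
  case (insert x F) then show ?case using polyfun.add[of "f x" n a "\<lambda>p. \<Sum>x\<in>F. f x p"] by simp
qed

lemma pf_prod: "finite A \<Longrightarrow> (\<And>x. x \<in> A \<Longrightarrow> f x \<in> polyfun n a) \<Longrightarrow> (\<lambda>p. \<Prod>x\<in>A. f x p) \<in> polyfun n a"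
proof (induction A rule: finite_induct)
  case empty then show ?case using polyfun.const[of 1] by simp
next
  case (insert x F) then show ?case using polyfun.mult[of "f x" n a "\<lambda>p. \<Prod>x\<in>F. f x p"] by simp
qed

lemma pf_shift: "P \<in> polyfun n a \<Longrightarrow> (\<lambda>p. P (pshift s p)) \<in> polyfun n a"
proof (induction rule: polyfun.induct)
  case (const c) then show ?case by (rule polyfun.const)
next
  case (var i r) then show ?case
    unfolding pshift_def by (intro pf_diff polyfun.var polyfun.const)
next
  case (add P Q) then show ?case by (intro polyfun.add)
next
  case (mult P Q) then show ?case by (intro polyfun.mult)
qed

lemma pf_dval: "valid_den n a d \<Longrightarrow> (\<lambda>p. dval p d) \<in> polyfun n a"
  by (cases d) (auto simp: dval_def valid_den_def intro!: polyfun.add pf_diff polyfun.var polyfun.const)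

lemma pf_dens: "\<forall>d\<in>set ds. valid_den n a d \<Longrightarrow> (\<lambda>p. prod_list (map (dval p) ds)) \<in> polyfun n a"
proof (induction ds)
  case Nil then show ?case using polyfun.const[of 1] by simp
next
  case (Cons d ds) then show ?case using polyfun.mult[OF pf_dval] by simp
qed

lemma dens_nz: "generic n a p \<Longrightarrow> \<forall>d\<in>set ds. valid_den n a d \<Longrightarrow> prod_list (map (dval p) ds) \<noteq> 0"
  by (induction ds) (auto simp: generic_def dval_def split: prod.splits)

lemma locring_iff: "c \<in> locring n a \<longleftrightarrow> (\<exists>P\<in>polyfun n a. \<exists>ds. (\<forall>d\<in>set ds. valid_den n a d) \<and>
      (\<forall>p. generic n a p \<longrightarrow> c p = P p / prod_list (map (dval p) ds)))"
proof -
  have "\<And>p ds. prod_list (map (\<lambda>(i, r, s, m). p (i, r) - p (i, s) + of_int m) ds) = prod_list (map (dval p) ds)"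
    by (simp add: dval_def[abs_def])
  then show ?thesis unfolding locring_def by simp
qed

lemma lr_pf: "P \<in> polyfun n a \<Longrightarrow> P \<in> locring n a"
  unfolding locring_iff by (rule bexI[of _ P]) (auto intro: exI[of _ "[]"])

lemma lr_const: "(\<lambda>p. c) \<in> locring n a"
  by (rule lr_pf) (rule polyfun.const)

lemma lr_cong: "c \<in> locring n a \<Longrightarrow> (\<And>p. generic n a p \<Longrightarrow> c' p = c p) \<Longrightarrow> c' \<in> locring n a"
  unfolding locring_iff by metis

lemma lr_add: assumes "c \<in> locring n a" "d \<in> locring n a" shows "(\<lambda>p. c p + d p) \<in> locring n a"
proof -
  obtain P ds where P: "P \<in> polyfun n a" "\<forall>d\<in>set ds. valid_den n a d"
    "\<And>p. generic n a p \<Longrightarrow> c p = P p / prod_list (map (dval p) ds)" using assms(1) unfolding locring_iff by metis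
  obtain Q es where Q: "Q \<in> polyfun n a" "\<forall>d\<in>set es. valid_den n a d"
    "\<And>p. generic n a p \<Longrightarrow> d p = Q p / prod_list (map (dval p) es)" using assms(2) unfolding locring_iff by metis
  show ?thesis unfolding locring_iff
  proof (intro bexI exI conjI allI impI)
    show "\<forall>d\<in>set (ds @ es). valid_den n a d" using P Q by auto
    fix p assume g: "generic n a p"
    show "c p + d p = (P p * prod_list (map (dval p) es) + Q p * prod_list (map (dval p) ds)) / prod_list (map (dval p) (ds @ es))"
      using dens_nz[OF g P(2)] dens_nz[OF g Q(2)] by (simp only: P(3)[OF g] Q(3)[OF g]) (simp add: field_simps)
  next
    show "(\<lambda>p. P p * prod_list (map (dval p) es) + Q p * prod_list (map (dval p) ds)) \<in> polyfun n a"
      using P Q by (intro polyfun.add polyfun.mult pf_dens) auto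
  qed
qed

lemma lr_mult: assumes "c \<in> locring n a" "d \<in> locring n a" shows "(\<lambda>p. c p * d p) \<in> locring n a"
proof -
  obtain P ds where P: "P \<in> polyfun n a" "\<forall>d\<in>set ds. valid_den n a d"
    "\<And>p. generic n a p \<Longrightarrow> c p = P p / prod_list (map (dval p) ds)" using assms(1) unfolding locring_iff by metis
  obtain Q es where Q: "Q \<in> polyfun n a" "\<forall>d\<in>set es. valid_den n a d"
    "\<And>p. generic n a p \<Longrightarrow> d p = Q p / prod_list (map (dval p) es)" using assms(2) unfolding locring_iff by metis
  show ?thesis unfolding locring_iff
  proof (intro bexI exI conjI allI impI)
    show "\<forall>d\<in>set (ds @ es). valid_den n a d" using P Q by auto
    fix p assume g: "generic n a p"
    show "c p * d p = (P p * Q p) / prod_list (map (dval p) (ds @ es))"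
      using P(3)[OF g] Q(3)[OF g] by simp
  next
    show "(\<lambda>p. P p * Q p) \<in> polyfun n a" using P Q by (intro polyfun.mult)
  qed
qed

lemma lr_minus: "c \<in> locring n a \<Longrightarrow> (\<lambda>p. - c p) \<in> locring n a"
  using lr_mult[OF lr_const, of c "-1"] by simp

lemma lr_diff: "c \<in> locring n a \<Longrightarrow> d \<in> locring n a \<Longrightarrow> (\<lambda>p. c p - d p) \<in> locring n a"
  using lr_add[OF _ lr_minus] by (simp add: algebra_simps)

lemma lr_sum: "finite A \<Longrightarrow> (\<And>x. x \<in> A \<Longrightarrow> f x \<in> locring n a) \<Longrightarrow> (\<lambda>p. \<Sum>x\<in>A. f x p) \<in> locring n a"
proof (induction A rule: finite_induct)
  case empty then show ?case using lr_const[of 0] by simp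
next
  case (insert x F) then show ?case using lr_add[of "f x" "\<lambda>p. \<Sum>x\<in>F. f x p"] by simp
qed

lemma lr_prod: "finite A \<Longrightarrow> (\<And>x. x \<in> A \<Longrightarrow> f x \<in> locring n a) \<Longrightarrow> (\<lambda>p. \<Prod>x\<in>A. f x p) \<in> locring n a"
proof (induction A rule: finite_induct)
  case empty then show ?case using lr_const[of 1] by simp
next
  case (insert x F) then show ?case using lr_mult[of "f x" "\<lambda>p. \<Prod>x\<in>F. f x p"] by simp
qed

lemma lr_inv_den: "valid_den n a (i, r, s, m) \<Longrightarrow> (\<lambda>p. 1 / (p (i, r) - p (i, s) + of_int m)) \<in> locring n a"
  unfolding locring_iff
  by (rule bexI[OF _ polyfun.const[of 1]], rule exI[of _ "[(i, r, s, m)]"]) (simp add: dval_def)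

lemma generic_shift: "generic n a p \<Longrightarrow> generic n a (pshift s p)"
  unfolding generic_def pshift_def
proof (intro allI impI)
  fix i r s' m assume g: "\<forall>i r s m. valid_den n a (i, r, s, m) \<longrightarrow> p (i, r) - p (i, s) + of_int m \<noteq> 0"
    and v: "valid_den n a (i, r, s', m)"
  have "p (i, r) - of_int (s (i, r)) - (p (i, s') - of_int (s (i, s'))) + of_int m =
        p (i, r) - p (i, s') + of_int (m - s (i, r) + s (i, s'))" by simp
  moreover have "valid_den n a (i, r, s', m - s (i, r) + s (i, s'))" using v by (simp add: valid_den_def)
  ultimately show "p (i, r) - of_int (s (i, r)) - (p (i, s') - of_int (s (i, s'))) + of_int m \<noteq> 0"
    using g by metis
qed

lemma lr_shift: assumes "c \<in> locring n a" shows "(\<lambda>p. c (pshift s p)) \<in> locring n a"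
proof -
  obtain P ds where P: "P \<in> polyfun n a" "\<forall>d\<in>set ds. valid_den n a d"
    "\<And>p. generic n a p \<Longrightarrow> c p = P p / prod_list (map (dval p) ds)" using assms(1) unfolding locring_iff by metis
  define sd where "sd = (\<lambda>(i::nat, r::nat, s'::nat, m::int). (i, r, s', m - s (i, r) + s (i, s')))"
  have e: "\<And>p. map (dval (pshift s p)) ds = map (dval p) (map sd ds)"
    by (auto simp: dval_def pshift_def sd_def split: prod.splits)
  have v: "\<forall>d\<in>set (map sd ds). valid_den n a d" using P(2) by (auto simp: sd_def valid_den_def split: prod.splits)
  show ?thesis unfolding locring_iff
  proof (intro bexI exI conjI allI impI)
    show "\<forall>d\<in>set (map sd ds). valid_den n a d" by (rule v)
    fix p assume g: "generic n a p"
    show "c (pshift s p) = P (pshift s p) / prod_list (map (dval p) (map sd ds))"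
      using P(3)[OF generic_shift[OF g, of s]] e[of p] by simp
  qed (rule pf_shift[OF P(1)])
qed


lemma lr_power: "c \<in> locring n a \<Longrightarrow> (\<lambda>p. c p ^ k) \<in> locring n a"
  by (induction k) (auto intro: lr_const lr_mult)

end

lemma fun_sum_apply: "(\<Sum>i\<in>A. f i) (p::'a) = (\<Sum>i\<in>A. f i p :: 'b::comm_monoid_add)"
  by (induction A rule: infinite_finite_induct) auto

lemma fun_power_apply: "((f::'a \<Rightarrow> 'b::monoid_mult) ^ k) p = (f p) ^ k"
  by (induction k) auto

lemma poly_apply: "poly (P::(pvar \<Rightarrow> complex) poly) f p = (\<Sum>i\<le>degree P. coeff P i p * (f p) ^ i)"
  by (simp add: poly_altdef fun_sum_apply fun_power_apply)

definition ev :: "(pvar \<Rightarrow> complex) poly \<Rightarrow> complex \<Rightarrow> pvar \<Rightarrow> complex" where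
  "ev P z p = poly P (\<lambda>_. z) p"

lemma ev_apply: "ev P z p = (\<Sum>i\<le>degree P. coeff P i p * z ^ i)"
  by (simp add: ev_def poly_apply)

lemma ev_mult: "ev (P * Q) z p = ev P z p * ev Q z p"
  by (simp add: ev_def)
lemma ev_add: "ev (P + Q) z p = ev P z p + ev Q z p"
  by (simp add: ev_def)
lemma ev_const: "ev [:c:] z p = c p"
  by (simp add: ev_def)
lemma ev_X: "ev [:-c, 1:] z p = z - c p"
  by (simp add: ev_def)

lemma poly_apply_cong: "f p = g p \<Longrightarrow> poly (P::(pvar \<Rightarrow> complex) poly) f p = poly P g p"
  by (simp add: poly_apply)

lemma ev_poly: "ev P (w p) p = poly P w p"
  unfolding ev_def by (rule poly_apply_cong) simp

context fixes n :: nat and a :: "nat \<Rightarrow> nat"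
begin

definition lcoeffs :: "(pvar \<Rightarrow> complex) poly \<Rightarrow> bool" where
  "lcoeffs P = (\<forall>i. coeff P i \<in> locring n a)"

definition lpoly :: "(complex \<Rightarrow> pvar \<Rightarrow> complex) \<Rightarrow> bool" where
  "lpoly f = (\<exists>P. lcoeffs P \<and> (\<forall>p. generic n a p \<longrightarrow> (\<forall>z. f z p = ev P z p)))"

lemma lr_zero: "0 \<in> locring n a"
  using lr_const[where c=0 and n=n and a=a] by (simp add: zero_fun_def)

lemma lr_one: "1 \<in> locring n a"
  using lr_const[where c=1 and n=n and a=a] by (simp add: one_fun_def)

lemma lr_add': "c \<in> locring n a \<Longrightarrow> d \<in> locring n a \<Longrightarrow> c + d \<in> locring n a"
  using lr_add[where c=c and d=d and n=n and a=a] by (simp add: plus_fun_def)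

lemma lr_mult': "c \<in> locring n a \<Longrightarrow> d \<in> locring n a \<Longrightarrow> c * d \<in> locring n a"
  using lr_mult[where c=c and d=d and n=n and a=a] by (simp add: times_fun_def)

lemma lr_sum': "(\<And>x. x \<in> A \<Longrightarrow> f x \<in> locring n a) \<Longrightarrow> (\<Sum>x\<in>A. f x) \<in> locring n a"
proof (induction A rule: infinite_finite_induct)
  case (infinite A) then show ?case using lr_const[where c=0 and n=n and a=a] by simp
next
  case empty then show ?case using lr_const[where c=0 and n=n and a=a] by simp
next
  case (insert x F)
  have "f x \<in> locring n a" "sum f F \<in> locring n a" using insert by auto
  then show ?case by (simp only: sum.insert[OF insert.hyps] lr_add')
qed

lemma lr_power': "c \<in> locring n a \<Longrightarrow> c ^ k \<in> locring n a"
  by (induction k) (auto intro: lr_one lr_mult')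

lemma lcoeffs_const: "c \<in> locring n a \<Longrightarrow> lcoeffs [:c:]"
  unfolding lcoeffs_def by (auto simp: coeff_pCons split: nat.splits intro: lr_zero)

lemma lcoeffs_pCons: "c \<in> locring n a \<Longrightarrow> lcoeffs P \<Longrightarrow> lcoeffs (pCons c P)"
  unfolding lcoeffs_def by (auto simp: coeff_pCons split: nat.splits)

lemma lcoeffs_pCons_D: "lcoeffs (pCons c P) \<Longrightarrow> lcoeffs P"
  unfolding lcoeffs_def by (metis coeff_pCons_Suc)

lemma lcoeffs_add: "lcoeffs P \<Longrightarrow> lcoeffs Q \<Longrightarrow> lcoeffs (P + Q)"
  unfolding lcoeffs_def by (auto intro: lr_add')

lemma lcoeffs_mult: "lcoeffs P \<Longrightarrow> lcoeffs Q \<Longrightarrow> lcoeffs (P * Q)"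
  unfolding lcoeffs_def coeff_mult by (auto intro!: lr_sum' lr_mult')

lemma lr_poly: assumes "lcoeffs P" "w \<in> locring n a" shows "poly P w \<in> locring n a"
  unfolding poly_altdef
  by (intro lr_sum' lr_mult' lr_power' assms(2)) (use assms(1) in \<open>simp add: lcoeffs_def\<close>)

lemma lcoeffs_synth: "lcoeffs P \<Longrightarrow> w \<in> locring n a \<Longrightarrow> lcoeffs (synthetic_div P w)"
proof (induction P rule: pCons_induct)
  case 0 then show ?case by (simp add: lcoeffs_def lr_zero)
next
  case (pCons c P)
  have l: "lcoeffs P" using pCons.prems(1) by (rule lcoeffs_pCons_D)
  show ?case unfolding synthetic_div_pCons
    by (intro lcoeffs_pCons lr_poly l pCons.prems(2) pCons.IH)
qed

lemma synth_ev: "ev P z p = (z - w p) * ev (synthetic_div P w) z p + poly P w p"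
proof -
  have "ev P z p = ev ([:-w, 1:] * synthetic_div P w + [:poly P w:]) z p"
    by (simp only: synthetic_div_correct')
  then show ?thesis by (simp only: ev_add ev_mult ev_X ev_const)
qed

lemma lpoly_cong: "lpoly f \<Longrightarrow> (\<And>p z. generic n a p \<Longrightarrow> g z p = f z p) \<Longrightarrow> lpoly g"
  unfolding lpoly_def by simp

lemma lpoly_const: "c \<in> locring n a \<Longrightarrow> lpoly (\<lambda>z p. c p)"
  unfolding lpoly_def by (intro exI[of _ "[:c:]"]) (simp add: lcoeffs_const ev_const)

lemma lpoly_z: "lpoly (\<lambda>z p. z)"
  unfolding lpoly_def
  by (intro exI[of _ "[:0, 1:]"]) (simp add: lcoeffs_pCons lcoeffs_const lr_zero lr_one ev_def)

lemma lpoly_add: assumes "lpoly f" "lpoly g" shows "lpoly (\<lambda>z p. f z p + g z p)"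
proof -
  obtain P where P: "lcoeffs P" "\<And>p z. generic n a p \<Longrightarrow> f z p = ev P z p" using assms(1) unfolding lpoly_def by blast
  obtain Q where Q: "lcoeffs Q" "\<And>p z. generic n a p \<Longrightarrow> g z p = ev Q z p" using assms(2) unfolding lpoly_def by blast
  show ?thesis unfolding lpoly_def
    by (rule exI[of _ "P + Q"]) (simp add: P Q lcoeffs_add ev_add)
qed

lemma lpoly_mult: assumes "lpoly f" "lpoly g" shows "lpoly (\<lambda>z p. f z p * g z p)"
proof -
  obtain P where P: "lcoeffs P" "\<And>p z. generic n a p \<Longrightarrow> f z p = ev P z p" using assms(1) unfolding lpoly_def by blast
  obtain Q where Q: "lcoeffs Q" "\<And>p z. generic n a p \<Longrightarrow> g z p = ev Q z p" using assms(2) unfolding lpoly_def by blast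
  show ?thesis unfolding lpoly_def
    by (rule exI[of _ "P * Q"]) (simp add: P Q lcoeffs_mult ev_mult)
qed

lemma lpoly_cmult: "c \<in> locring n a \<Longrightarrow> lpoly g \<Longrightarrow> lpoly (\<lambda>z p. c p * g z p)"
  using lpoly_mult[OF lpoly_const] by blast

lemma lpoly_zf: "P \<in> polyfun n a \<Longrightarrow> lpoly (\<lambda>z p. z - P p)"
  using lpoly_add[OF lpoly_z lpoly_const[OF lr_pf[OF pf_minus]]] by simp

lemma lpoly_sum: "finite A \<Longrightarrow> (\<And>x. x \<in> A \<Longrightarrow> lpoly (f x)) \<Longrightarrow> lpoly (\<lambda>z p. \<Sum>x\<in>A. f x z p)"
proof (induction A rule: finite_induct)
  case empty then show ?case using lpoly_const[OF lr_const[where c=0]] by simp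
next
  case (insert x F) then show ?case using lpoly_add[of "f x" "\<lambda>z p. \<Sum>x\<in>F. f x z p"] by simp
qed

lemma lpoly_prod: "finite A \<Longrightarrow> (\<And>x. x \<in> A \<Longrightarrow> lpoly (f x)) \<Longrightarrow> lpoly (\<lambda>z p. \<Prod>x\<in>A. f x z p)"
proof (induction A rule: finite_induct)
  case empty then show ?case using lpoly_const[OF lr_const[where c=1]] by simp
next
  case (insert x F) then show ?case using lpoly_mult[of "f x" "\<lambda>z p. \<Prod>x\<in>F. f x z p"] by simp
qed

lemma lpoly_list: assumes "lpoly f"
  shows "\<exists>cs. set cs \<subseteq> locring n a \<and> (\<forall>p. generic n a p \<longrightarrow> (\<forall>z. f z p = (\<Sum>d<length cs. (cs ! d) p * z ^ d)))"
proof -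
  obtain P where P: "lcoeffs P" "\<And>p z. generic n a p \<Longrightarrow> f z p = ev P z p" using assms unfolding lpoly_def by blast
  define cs where "cs = map (coeff P) [0..<Suc (degree P)]"
  have "set cs \<subseteq> locring n a" using P(1) by (auto simp: cs_def lcoeffs_def)
  moreover have "\<And>p z. generic n a p \<Longrightarrow> f z p = (\<Sum>d<length cs. (cs ! d) p * z ^ d)"
  proof -
    fix p z
    have "(\<Sum>d<length cs. (cs ! d) p * z ^ d) = (\<Sum>d<Suc (degree P). coeff P d p * z ^ d)"
      unfolding cs_def length_map length_upt
      by (rule sum.cong) (auto simp del: upt_Suc)
    then show "generic n a p \<Longrightarrow> f z p = (\<Sum>d<length cs. (cs ! d) p * z ^ d)"
      by (simp only: P(2) ev_apply lessThan_Suc_atMost)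
  qed
  ultimately show ?thesis by blast
qed


definition pt :: "pvar \<Rightarrow> complex \<Rightarrow> pvar" where
  "pt p t = (\<lambda>v. p v + t * of_nat (fst v))"

lemma pt_0: "pt p 0 = p" by (simp add: pt_def)

lemma generic_pt: "generic n a p \<Longrightarrow> generic n a (pt p t)"
  unfolding generic_def pt_def by simp

lemma pf_cont: "P \<in> polyfun n a \<Longrightarrow> isCont (\<lambda>t. P (pt p t)) t0"
proof (induction rule: polyfun.induct)
  case (var i r) then show ?case unfolding pt_def by (intro continuous_intros)
qed (auto intro: continuous_intros)

lemma lr_cont: assumes "c \<in> locring n a" "generic n a p" shows "isCont (\<lambda>t. c (pt p t)) 0"
proof -
  obtain P ds where P: "P \<in> polyfun n a" "\<forall>d\<in>set ds. valid_den n a d"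
    "\<And>p. generic n a p \<Longrightarrow> c p = P p / prod_list (map (dval p) ds)" using assms(1) unfolding locring_iff by metis
  have e: "(\<lambda>t. c (pt p t)) = (\<lambda>t. P (pt p t) / prod_list (map (dval (pt p t)) ds))"
    using P(3)[OF generic_pt[OF assms(2)]] by auto
  show ?thesis unfolding e
    using dens_nz[OF assms(2) P(2)] pf_cont[OF P(1)] pf_cont[OF pf_dens[OF P(2)]]
    by (intro continuous_intros) (auto simp: pt_0)
qed

lemma ev_cont: assumes "lcoeffs Q" "generic n a p" shows "isCont (\<lambda>t. ev Q (pt p t (l, u) + 1) (pt p t)) 0"
  unfolding ev_apply
proof (intro continuous_intros)
  fix i show "isCont (\<lambda>t. coeff Q i (pt p t)) 0" using assms lcoeffs_def lr_cont by blast
qed (auto simp: pt_def intro!: continuous_intros)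

lemma div_roots:
  assumes "finite W" "W \<subseteq> {(l, u). 1 \<le> l \<and> l < n \<and> 1 \<le> u \<and> u \<le> a l}" "lcoeffs P"
    "\<forall>(l, u)\<in>W. \<forall>p. generic n a p \<longrightarrow> ev P (p (l, u) + 1) p = 0"
  shows "\<exists>Q. lcoeffs Q \<and> (\<forall>p. generic n a p \<longrightarrow> (\<forall>z. ev P z p = (\<Prod>(l, u)\<in>W. z - (p (l, u) + 1)) * ev Q z p))"
  using assms
proof (induction W arbitrary: P rule: finite_induct)
  case empty then show ?case by (intro exI[of _ P]) simp
next
  case (insert x W)
  obtain l0 u0 where x: "x = (l0, u0)" by (cases x)
  define w where "w = (\<lambda>p::pvar. p (l0, u0) + 1)"
  have x_valid: "1 \<le> l0" "l0 < n" "1 \<le> u0" "u0 \<le> a l0" using insert.prems(1) x by auto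
  have wl: "w \<in> locring n a" unfolding w_def
    by (rule lr_pf, intro polyfun.add polyfun.var polyfun.const x_valid)
  define Q1 where "Q1 = synthetic_div P w"
  have Q1l: "lcoeffs Q1" unfolding Q1_def by (rule lcoeffs_synth[OF insert.prems(2) wl])
  have P0: "poly P w p = 0" if g: "generic n a p" for p
  proof -
    have "ev P (p (l0, u0) + 1) p = 0" using insert.prems(3) g x by blast
    then show ?thesis by (simp only: ev_poly[symmetric] w_def)
  qed
  have PQ: "ev P z p = (z - (p (l0, u0) + 1)) * ev Q1 z p" if g: "generic n a p" for p z
  proof -
    have "ev P z p = (z - w p) * ev Q1 z p + poly P w p" unfolding Q1_def by (rule synth_ev)
    then show ?thesis using P0[OF g] by (simp only: w_def add_0_right)
  qed
  have case1: "ev Q1 (p (l, u) + 1) p = 0"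
    if g: "generic n a p" and lu: "(l, u) \<in> W" and ne: "p (l, u) \<noteq> p (l0, u0)" for p l u
  proof -
    have "0 = ev P (p (l, u) + 1) p" using insert.prems(3) lu g by auto
    also have "\<dots> = (p (l, u) - p (l0, u0)) * ev Q1 (p (l, u) + 1) p" using PQ[OF g] by simp
    finally show ?thesis using ne by simp
  qed
  have Q1roots: "\<forall>(l, u)\<in>W. \<forall>p. generic n a p \<longrightarrow> ev Q1 (p (l, u) + 1) p = 0"
  proof (intro ballI allI impI, clarify)
    fix l u p assume lu: "(l, u) \<in> W" and g: "generic n a p"
    show "ev Q1 (p (l, u) + 1) p = 0"
    proof (cases "p (l, u) = p (l0, u0)")
      case False then show ?thesis using case1[OF g lu] by simp
    next
      case True
      have lne: "l \<noteq> l0"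
      proof
        assume ll: "l = l0"
        have "u \<noteq> u0" using lu insert.hyps(2) x ll by auto
        moreover have "1 \<le> u" "u \<le> a l" using lu insert.prems(1) by auto
        ultimately have "valid_den n a (l, u, u0, 0)" using x_valid ll by (simp add: valid_den_def)
        then have "p (l, u) - p (l, u0) + of_int 0 \<noteq> 0" using g unfolding generic_def by blast
        then show False using True ll by simp
      qed
      define g where "g = (\<lambda>t. ev Q1 (pt p t (l, u) + 1) (pt p t))"
      have gc: "isCont g 0" unfolding g_def by (rule ev_cont[OF Q1l g])
      have gz: "g t = 0" if "t \<noteq> 0" for t
      proof -
        have "pt p t (l, u) - pt p t (l0, u0) = t * (of_nat l - of_nat l0)"
          using True by (simp add: pt_def algebra_simps)
        moreover have "(of_nat l - of_nat l0 :: complex) \<noteq> 0" using lne by simp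
        ultimately have "pt p t (l, u) \<noteq> pt p t (l0, u0)" using that by auto
        then show ?thesis unfolding g_def using case1[OF generic_pt[OF g] lu] by simp
      qed
      have "(g \<longlongrightarrow> g 0) (at 0)" using gc by (simp add: isCont_def)
      moreover have "(g \<longlongrightarrow> 0) (at 0)"
        by (rule tendsto_eventually) (auto simp: eventually_at_filter gz)
      ultimately have "g 0 = 0" by (rule tendsto_unique[rotated]) simp
      then show ?thesis by (simp add: g_def pt_0)
    qed
  qed
  have Wsub: "W \<subseteq> {(l, u). 1 \<le> l \<and> l < n \<and> 1 \<le> u \<and> u \<le> a l}" using insert.prems(1) by simp
  obtain Q where Q1: "lcoeffs Q" and Q2: "\<forall>p. generic n a p \<longrightarrow> (\<forall>z. ev Q1 z p = (\<Prod>(l, u)\<in>W. z - (p (l, u) + 1)) * ev Q z p)"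
    using insert.IH[OF Wsub Q1l Q1roots] by blast
  show ?case
  proof (intro exI conjI allI impI)
    show "lcoeffs Q" by (rule Q1)
    fix p z assume g: "generic n a p"
    have "ev P z p = (z - (p (l0, u0) + 1)) * ((\<Prod>(l, u)\<in>W. z - (p (l, u) + 1)) * ev Q z p)"
      using PQ[OF g, of z] Q2 g by simp
    also have "\<dots> = (\<Prod>(l, u)\<in>insert x W. z - (p (l, u) + 1)) * ev Q z p"
      using insert.hyps(2) by (simp add: insert.hyps(1) x)
    finally show "ev P z p = (\<Prod>(l, u)\<in>insert x W. z - (p (l, u) + 1)) * ev Q z p" .
  qed
qed

end



lemma qsum_at: "qsum i j r (l, u) = (if i \<le> l \<and> l < j \<and> r l = u then 1 else 0)"
proof -
  have "qsum i j r (l, u) = (\<Sum>k\<in>{i..<j}. if k = l then (if r l = u then 1 else 0) else 0)"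
    unfolding qsum_def by (intro sum.cong) auto
  also have "\<dots> = (if l \<in> {i..<j} then (if r l = u then 1 else 0) else 0)" by (rule sum.delta) simp
  finally show ?thesis by auto
qed

lemma qsum_empty: "qsum i i r = (\<lambda>v. 0)"
  unfolding qsum_def by simp

lemma qsum_split: "j < al \<Longrightarrow> qsum j al (\<rho>(j := s)) v = (if v = (j, s) then 1 else 0) + qsum (Suc j) al \<rho> v"
  by (cases v) (auto simp: qsum_at)

definition shp :: "nat \<Rightarrow> nat \<Rightarrow> (nat \<Rightarrow> nat) \<Rightarrow> pvar \<Rightarrow> pvar" where
  "shp i al r p = pshift (\<lambda>v. - qsum i al r v) p"

lemma shp_at: "shp i al r p (l, u) = p (l, u) + (if i \<le> l \<and> l < al \<and> r l = u then 1 else 0)"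
  by (simp add: shp_def pshift_def qsum_at)

lemma Pp_remove: "u \<in> {1..a l} \<Longrightarrow> Pp a l p x = (x - p (l, u)) * Ppr a l u p x"
  unfolding Pp_def Ppr_def by (rule prod.remove) auto

lemma Ppr_remove: "u \<in> {1..a l} \<Longrightarrow> u \<noteq> r \<Longrightarrow> Ppr a l r p x = (x - p (l, u)) * (\<Prod>s\<in>{1..a l} - {r} - {u}. x - p (l, s))"
  unfolding Ppr_def by (rule prod.remove) auto

lemma Pp_zero: "u \<in> {1..a l} \<Longrightarrow> Pp a l p (p (l, u)) = 0"
  by (simp add: Pp_remove)

lemma Ppr_zero: "u \<in> {1..a l} \<Longrightarrow> u \<noteq> r \<Longrightarrow> Ppr a l r p (p (l, u)) = 0"
  by (simp add: Ppr_remove)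

lemma Pp_cong: "(\<And>u. p (l, u) = q (l, u)) \<Longrightarrow> Pp a l p x = Pp a l q x"
  unfolding Pp_def by simp

lemma Ppr_cong: "(\<And>u. p (l, u) = q (l, u)) \<Longrightarrow> Ppr a l r p x = Ppr a l r q x"
  unfolding Ppr_def by simp

lemma Pp_empty: "a l = 0 \<Longrightarrow> Pp a l p x = 1"
  unfolding Pp_def by simp

lemma Ppr_nz: assumes "generic n a p" "1 \<le> l" "l < n" "r \<in> {1..a l}"
  shows "Ppr a l r p (p (l, r) + of_int m) \<noteq> 0"
proof -
  have "p (l, r) + of_int m - p (l, u) \<noteq> 0" if "u \<in> {1..a l} - {r}" for u
  proof -
    have "valid_den n a (l, r, u, m)" using assms that by (auto simp: valid_den_def)
    then have "p (l, r) - p (l, u) + of_int m \<noteq> 0" using assms(1) unfolding generic_def by blast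
    then show ?thesis by (simp add: algebra_simps)
  qed
  then show ?thesis unfolding Ppr_def by (simp add: prod_zero_iff)
qed

lemma Ppr_nz0: "generic n a p \<Longrightarrow> 1 \<le> l \<Longrightarrow> l < n \<Longrightarrow> r \<in> {1..a l} \<Longrightarrow> Ppr a l r p (p (l, r)) \<noteq> 0"
  using Ppr_nz[of n a p l r 0] by simp

lemma Ppr_nz1: "generic n a p \<Longrightarrow> 1 \<le> l \<Longrightarrow> l < n \<Longrightarrow> r \<in> {1..a l} \<Longrightarrow> Ppr a l r p (p (l, r) + 1) \<noteq> 0"
  using Ppr_nz[of n a p l r 1] by simp

lemma tuples_in: "r \<in> tuples a i al \<Longrightarrow> k \<in> {i..<al} \<Longrightarrow> r k \<in> {1..a k}"
  unfolding tuples_def by auto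

lemma finite_tuples: "finite (tuples a i al)"
  unfolding tuples_def by (intro finite_PiE) auto

lemma tuples_upd: "j < al \<Longrightarrow> s \<in> {1..a j} \<Longrightarrow> \<rho> \<in> tuples a (Suc j) al \<Longrightarrow> \<rho>(j := s) \<in> tuples a j al"
  unfolding tuples_def by (auto simp: PiE_iff extensional_def)

lemma tuples_bij: assumes "j < al" "s \<in> {1..a j}"
  shows "bij_betw (\<lambda>\<rho>. \<rho>(j := s)) (tuples a (Suc j) al) {r \<in> tuples a j al. r j = s}"
proof (rule bij_betw_imageI)
  show "inj_on (\<lambda>\<rho>. \<rho>(j := s)) (tuples a (Suc j) al)"
  proof (rule inj_onI)
    fix x y assume x: "x \<in> tuples a (Suc j) al" and y: "y \<in> tuples a (Suc j) al" and e: "x(j := s) = y(j := s)"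
    have "x j = y j" using x y unfolding tuples_def by (auto simp: PiE_iff extensional_def)
    then show "x = y" using e by (metis fun_upd_triv fun_upd_upd)
  qed
  show "(\<lambda>\<rho>. \<rho>(j := s)) ` tuples a (Suc j) al = {r \<in> tuples a j al. r j = s}"
  proof (intro equalityI subsetI)
    fix r assume "r \<in> (\<lambda>\<rho>. \<rho>(j := s)) ` tuples a (Suc j) al"
    then show "r \<in> {r \<in> tuples a j al. r j = s}" using tuples_upd[of j al s a] assms by auto
  next
    fix r assume r: "r \<in> {r \<in> tuples a j al. r j = s}"
    then have "r(j := undefined) \<in> tuples a (Suc j) al" unfolding tuples_def
      by (auto simp: PiE_iff extensional_def)
    moreover have "r = (r(j := undefined))(j := s)" using r by auto
    ultimately show "r \<in> (\<lambda>\<rho>. \<rho>(j := s)) ` tuples a (Suc j) al" by blast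
  qed
qed

lemma tmul_fst: "fst (tmul (tmul F G) E) z p =
   fst F z p * fst G z (pshift (snd F) p) * fst E z (pshift (\<lambda>v. snd F v + snd G v) p)"
  by (cases F; cases G; cases E) (simp add: tmul_def pshift_def)

lemma tmul_snd: "snd (tmul (tmul F G) E) = (\<lambda>v. snd F v + snd G v + snd E v)"
  by (cases F; cases G; cases E) (simp add: tmul_def)

definition fA :: "(nat \<Rightarrow> nat) \<Rightarrow> nat \<Rightarrow> nat \<Rightarrow> (nat \<Rightarrow> nat) \<Rightarrow> pvar \<Rightarrow> complex" where
  "fA a al i r p = (if i < al then (Pp a al p (p (al - 1, r (al - 1)) + 1)
                 * (\<Prod>k\<in>{i + 1..<al}. Ppr a k (r k) p (p (k - 1, r (k - 1)) + 1)))
               / (\<Prod>k\<in>{i..<al}. Ppr a k (r k) p (p (k, r k))) else 1)"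

definition eB :: "divisor_pts \<Rightarrow> (nat \<Rightarrow> nat) \<Rightarrow> nat \<Rightarrow> nat \<Rightarrow> (nat \<Rightarrow> nat) \<Rightarrow> pvar \<Rightarrow> complex" where
  "eB Ds a be i r p = (if i < be then - (Pp a (i - 1) p (p (i, r i) - 1)
                 * (\<Prod>k\<in>{i..<be - 1}. Ppr a k (r k) p (p (k + 1, r (k + 1)) - 1)))
               / (\<Prod>k\<in>{i..<be}. Ppr a k (r k) p (p (k, r k)))
               * (\<Prod>k\<in>{i..<be}. Zf Ds k (p (k, r k))) else 1)"

lemma fterm_fst: "i \<le> al \<Longrightarrow> fst (fterm a al i r) z p = fA a al i r p * (if i < al then 1 / (z - p (i, r i) - 1) else 1)"
  unfolding fterm_def fA_def by auto

lemma fterm_snd: "i \<le> al \<Longrightarrow> snd (fterm a al i r) = (\<lambda>v. - qsum i al r v)"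
  unfolding fterm_def by (auto simp: qsum_empty)

lemma eterm_fst: "i \<le> be \<Longrightarrow> fst (eterm Ds a i be r) z p = eB Ds a be i r p * (if i < be then 1 / (z - p (i, r i)) else 1)"
  unfolding eterm_def eB_def by auto

lemma eterm_snd: "i \<le> be \<Longrightarrow> snd (eterm Ds a i be r) = qsum i be r"
  unfolding eterm_def by (auto simp: qsum_empty)

lemma gterm_fst: "fst (gterm Ds a i) z p = Pp a i p z / Pp a (i - 1) p (z - 1) * (\<Prod>k<i. Zf Ds k z)"
  by (simp add: gterm_def)

lemma gterm_snd: "snd (gterm Ds a i) = (\<lambda>v. 0)"
  by (simp add: gterm_def)


definition Uset :: "(nat \<Rightarrow> nat) \<Rightarrow> nat \<Rightarrow> nat \<Rightarrow> nat \<Rightarrow> (nat \<Rightarrow> nat) \<Rightarrow> (nat \<Rightarrow> nat) \<Rightarrow> nat set" where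
  "Uset a al be i r r' = {1..a i} - (if i < al then {r i} else {}) - (if i < be then {r' i} else {})"

definition dg :: "nat \<Rightarrow> nat \<Rightarrow> nat \<Rightarrow> (nat \<Rightarrow> nat) \<Rightarrow> (nat \<Rightarrow> nat) \<Rightarrow> bool" where
  "dg al be i r r' = (i < al \<and> i < be \<and> r i = r' i)"

definition Lset :: "nat \<Rightarrow> nat \<Rightarrow> nat \<Rightarrow> (nat \<Rightarrow> nat) \<Rightarrow> (nat \<Rightarrow> nat) \<Rightarrow> nat set" where
  "Lset al be i r r' = {1..<min al be} - {i - 1} - (if dg al be i r r' then {i} else {})"

definition Hf :: "(nat \<Rightarrow> nat) \<Rightarrow> nat \<Rightarrow> nat \<Rightarrow> nat \<Rightarrow> (nat \<Rightarrow> nat) \<Rightarrow> (nat \<Rightarrow> nat) \<Rightarrow> complex \<Rightarrow> pvar \<Rightarrow> complex" where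
  "Hf a al be i r r' z p = (\<Prod>u\<in>Uset a al be i r r'. z - p (i, u)) * (\<Prod>l\<in>Lset al be i r r'. Pp a l p (z - 1))
      * (if dg al be i r r' then Ppr a i (r i) p (z - 1) else 1)"

lemma keyH:
  assumes i: "1 \<le> i" "i \<le> min al be"
    and rin: "i < al \<Longrightarrow> r i \<in> {1..a i}" and r'in: "i < be \<Longrightarrow> r' i \<in> {1..a i}"
    and z1: "i < al \<Longrightarrow> z \<noteq> p (i, r i) + 1" and z2: "i < be \<Longrightarrow> z \<noteq> shp i al r p (i, r' i)"
  shows "(if i < al then 1 / (z - p (i, r i) - 1) else 1) * Pp a i (shp i al r p) z
      * (if i < be then 1 / (z - shp i al r p (i, r' i)) else 1) * (\<Prod>l\<in>{1..<min al be} - {i - 1}. Pp a l p (z - 1))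
    = (\<Prod>u\<in>Uset a al be i r r'. z - p (i, u)) * (\<Prod>l\<in>Lset al be i r r'. Pp a l p (z - 1))
      * (if dg al be i r r' then Ppr a i (r i) p (z - 1) else 1)"
proof -
  define p2 where "p2 = shp i al r p"
  define A where "A = {1..a i}"
  have p2i: "\<And>u. p2 (i, u) = p (i, u) + (if i < al \<and> r i = u then 1 else 0)"
    unfolding p2_def shp_at using i by auto
  have PpA: "Pp a i p2 z = (\<Prod>u\<in>A. z - p2 (i, u))" unfolding Pp_def A_def ..
  define M where "M = (\<Prod>l\<in>{1..<min al be} - {i - 1}. Pp a l p (z - 1))"
  show ?thesis
  proof (cases "dg al be i r r'")
    case True
    then have c: "i < al" "i < be" "r' i = r i" unfolding dg_def by auto
    have U: "Uset a al be i r r' = A - {r i}" unfolding Uset_def A_def using c by auto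
    have L: "M = Pp a i p (z - 1) * (\<Prod>l\<in>Lset al be i r r'. Pp a l p (z - 1))"
    proof -
      have "i \<in> {1..<min al be} - {i - 1}" using c i by auto
      then show ?thesis unfolding M_def Lset_def using True by (simp add: prod.remove)
    qed
    have P1: "Pp a i p2 z = (z - p (i, r i) - 1) * (\<Prod>u\<in>A - {r i}. z - p (i, u))"
    proof -
      have "Pp a i p2 z = (z - p2 (i, r i)) * (\<Prod>u\<in>A - {r i}. z - p2 (i, u))"
        unfolding PpA using rin c(1) by (simp add: A_def prod.remove)
      also have "(\<Prod>u\<in>A - {r i}. z - p2 (i, u)) = (\<Prod>u\<in>A - {r i}. z - p (i, u))"
        by (intro prod.cong) (auto simp: p2i)
      finally show ?thesis using c by (simp add: p2i)
    qed
    have P2: "Pp a i p (z - 1) = (z - p (i, r i) - 1) * Ppr a i (r i) p (z - 1)"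
      using Pp_remove[of "r i" a i p "z - 1", OF rin[OF c(1)]] by (simp add: algebra_simps)
    have s2: "p2 (i, r' i) = p (i, r i) + 1" using c p2i by simp
    have nz: "z - p (i, r i) - 1 \<noteq> 0" using z1 c by (auto simp: algebra_simps)
    have e1: "z - p2 (i, r' i) = z - p (i, r i) - 1" using s2 by simp
    define d where "d = z - p (i, r i) - 1"
    have dnz: "d \<noteq> 0" using nz d_def by simp
    show ?thesis unfolding p2_def[symmetric] M_def[symmetric] U L P1 P2 e1 d_def[symmetric]
      using c dnz True by (simp add: field_simps)
  next
    case False
    have L: "Lset al be i r r' = {1..<min al be} - {i - 1}" unfolding Lset_def using False by simp
    have main: "(if i < al then 1 / (z - p (i, r i) - 1) else 1) * Pp a i p2 z * (if i < be then 1 / (z - p2 (i, r' i)) else 1)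
          = (\<Prod>u\<in>Uset a al be i r r'. z - p (i, u))"
    proof (cases "i < al")
      case al: True
      have P1: "Pp a i p2 z = (z - p (i, r i) - 1) * (\<Prod>u\<in>A - {r i}. z - p (i, u))"
      proof -
        have "Pp a i p2 z = (z - p2 (i, r i)) * (\<Prod>u\<in>A - {r i}. z - p2 (i, u))"
          unfolding PpA using rin al by (simp add: A_def prod.remove)
        also have "(\<Prod>u\<in>A - {r i}. z - p2 (i, u)) = (\<Prod>u\<in>A - {r i}. z - p (i, u))"
          by (intro prod.cong) (auto simp: p2i)
        finally show ?thesis using al by (simp add: p2i)
      qed
      have nz: "z - p (i, r i) - 1 \<noteq> 0" using z1 al by (auto simp: algebra_simps)
      show ?thesis
      proof (cases "i < be")
        case be: True
        have ne: "r' i \<noteq> r i" using False al be unfolding dg_def by auto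
        have U: "Uset a al be i r r' = A - {r i} - {r' i}" unfolding Uset_def A_def using al be by auto
        have P2: "(\<Prod>u\<in>A - {r i}. z - p (i, u)) = (z - p (i, r' i)) * (\<Prod>u\<in>A - {r i} - {r' i}. z - p (i, u))"
          using r'in[OF be] ne by (intro prod.remove) (auto simp: A_def)
        have s2: "p2 (i, r' i) = p (i, r' i)" using p2i ne by simp
        have nz2: "z - p (i, r' i) \<noteq> 0" using z2[OF be] s2 p2_def by auto
        define d where "d = z - p (i, r i) - 1"
        define d2 where "d2 = z - p (i, r' i)"
        have dnz: "d \<noteq> 0" "d2 \<noteq> 0" using nz nz2 d_def d2_def by auto
        show ?thesis unfolding p2_def[symmetric] M_def[symmetric] U P1 P2 s2 d_def[symmetric] d2_def[symmetric] using al be dnz by (simp add: field_simps)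
      next
        case be: False
        have U: "Uset a al be i r r' = A - {r i}" unfolding Uset_def A_def using al be by auto
        define d where "d = z - p (i, r i) - 1"
        have dnz: "d \<noteq> 0" using nz d_def by auto
        show ?thesis unfolding U P1 d_def[symmetric] using al be dnz by (simp add: field_simps)
      qed
    next
      case al: False
      have p2e: "\<And>u. p2 (i, u) = p (i, u)" using p2i al by simp
      show ?thesis
      proof (cases "i < be")
        case be: True
        have U: "Uset a al be i r r' = A - {r' i}" unfolding Uset_def A_def using al be by auto
        have P1: "Pp a i p2 z = (z - p (i, r' i)) * (\<Prod>u\<in>A - {r' i}. z - p (i, u))"
          unfolding PpA p2e using r'in[OF be] by (simp add: A_def prod.remove)
        have nz2: "z - p (i, r' i) \<noteq> 0" using z2[OF be] p2e p2_def by auto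
        define d2 where "d2 = z - p (i, r' i)"
        have dnz: "d2 \<noteq> 0" using nz2 d2_def by auto
        show ?thesis unfolding U P1 p2e d2_def[symmetric] using al be dnz by (simp add: field_simps)
      next
        case be: False
        have U: "Uset a al be i r r' = A" unfolding Uset_def A_def using al be by auto
        show ?thesis unfolding U PpA p2e using al be by simp
      qed
    qed
    show ?thesis unfolding p2_def[symmetric] M_def[symmetric] L using main False by (simp add: M_def)
  qed
qed


definition Ntm :: "divisor_pts \<Rightarrow> (nat \<Rightarrow> nat) \<Rightarrow> nat \<Rightarrow> nat \<Rightarrow> nat \<Rightarrow> (nat \<Rightarrow> nat) \<Rightarrow> (nat \<Rightarrow> nat) \<Rightarrow> complex \<Rightarrow> pvar \<Rightarrow> complex" where
  "Ntm Ds a al be i r r' z p = fA a al i r p * eB Ds a be i r' (shp i al r p) * (\<Prod>k\<in>{1..<i}. Zf Ds k z) * Hf a al be i r r' z p"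

definition Dd :: "(nat \<Rightarrow> nat) \<Rightarrow> nat \<Rightarrow> complex \<Rightarrow> pvar \<Rightarrow> complex" where
  "Dd a m z p = (\<Prod>l\<in>{1..<m}. Pp a l p (z - 1))"

definition ct :: "divisor_pts \<Rightarrow> (nat \<Rightarrow> nat) \<Rightarrow> nat \<Rightarrow> nat \<Rightarrow> nat \<Rightarrow> (nat \<Rightarrow> nat) \<Rightarrow> (nat \<Rightarrow> nat) \<Rightarrow> coef \<times> shift" where
  "ct Ds a al be i r r' = tmul (tmul (fterm a al i r) (gterm Ds a i)) (eterm Ds a i be r')"

lemma ct_snd: "i \<le> al \<Longrightarrow> i \<le> be \<Longrightarrow> snd (ct Ds a al be i r r') = (\<lambda>v. - qsum i al r v + qsum i be r' v)"
  unfolding ct_def tmul_snd by (simp add: fterm_snd gterm_snd eterm_snd)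

lemma alg_term: "Z0 \<noteq> 0 \<Longrightarrow> Pim \<noteq> 0 \<Longrightarrow>
   (F :: complex) * ph * (Pii / Pim * (Z0 * ZZ)) * (E * ps) / Z0 * (Pim * M) = F * E * ZZ * (ph * Pii * ps * M)"
  by (simp add: field_simps)

lemma term_eq:
  assumes a0: "a 0 = 0" and i: "1 \<le> i" "i \<le> min al be"
    and r: "r \<in> tuples a i al" and r': "r' \<in> tuples a i be"
    and z0: "Zf Ds 0 z \<noteq> 0" and z1: "i < al \<Longrightarrow> z \<noteq> p (i, r i) + 1"
    and z2: "i < be \<Longrightarrow> z \<noteq> shp i al r p (i, r' i)" and z3: "Pp a (i - 1) p (z - 1) \<noteq> 0"
  shows "fst (ct Ds a al be i r r') z p / Zf Ds 0 z * Dd a (min al be) z p = Ntm Ds a al be i r r' z p"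
proof -
  have ile: "i \<le> al" "i \<le> be" using i by auto
  define p2 where "p2 = shp i al r p"
  define ph where "ph = (if i < al then 1 / (z - p (i, r i) - 1) else 1)"
  define ps where "ps = (if i < be then 1 / (z - p2 (i, r' i)) else 1)"
  have c: "fst (ct Ds a al be i r r') z p = fA a al i r p * ph * (Pp a i p2 z / Pp a (i - 1) p2 (z - 1) * (\<Prod>k<i. Zf Ds k z))
        * (eB Ds a be i r' p2 * ps)"
    unfolding ct_def tmul_fst fterm_snd[OF ile(1)] gterm_snd fterm_fst[OF ile(1)] gterm_fst eterm_fst[OF ile(2)]
    by (simp add: p2_def ph_def ps_def shp_def)
  have Pi1: "Pp a (i - 1) p2 (z - 1) = Pp a (i - 1) p (z - 1)"
    by (rule Pp_cong) (insert i, auto simp: p2_def shp_at)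
  have Zs: "(\<Prod>k<i. Zf Ds k z) = Zf Ds 0 z * (\<Prod>k\<in>{1..<i}. Zf Ds k z)"
  proof -
    have "{..<i} = insert 0 {1..<i}" using i by auto
    then show ?thesis by simp
  qed
  define M where "M = (\<Prod>l\<in>{1..<min al be} - {i - 1}. Pp a l p (z - 1))"
  have DD: "Dd a (min al be) z p = Pp a (i - 1) p (z - 1) * M"
  proof (cases "i = 1")
    case True then show ?thesis unfolding Dd_def M_def by (simp add: Pp_empty a0)
  next
    case False
    then have "i - 1 \<in> {1..<min al be}" using i by auto
    then show ?thesis unfolding Dd_def M_def by (simp add: prod.remove)
  qed
  have rin: "i < al \<Longrightarrow> r i \<in> {1..a i}" using r tuples_in by (metis atLeastLessThan_iff order_refl)
  have r'in: "i < be \<Longrightarrow> r' i \<in> {1..a i}" using r' tuples_in by (metis atLeastLessThan_iff order_refl)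
  have K: "ph * Pp a i p2 z * ps * M = Hf a al be i r r' z p"
    unfolding ph_def ps_def p2_def M_def Hf_def by (rule keyH[where a=a and i=i and r=r and r'=r' and z=z and p=p and al=al and be=be, OF i rin r'in z1 z2])
  have "fst (ct Ds a al be i r r') z p / Zf Ds 0 z * Dd a (min al be) z p =
     fA a al i r p * ph * (Pp a i p2 z / Pp a (i - 1) p (z - 1) * (Zf Ds 0 z * (\<Prod>k\<in>{1..<i}. Zf Ds k z)))
        * (eB Ds a be i r' p2 * ps) / Zf Ds 0 z * (Pp a (i - 1) p (z - 1) * M)"
    by (simp only: c Pi1 Zs DD)
  also have "\<dots> = fA a al i r p * eB Ds a be i r' p2 * (\<Prod>k\<in>{1..<i}. Zf Ds k z) * (ph * Pp a i p2 z * ps * M)"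
    by (rule alg_term[OF z0 z3])
  also have "\<dots> = Ntm Ds a al be i r r' z p" by (simp only: Ntm_def p2_def[symmetric] K)
  finally show ?thesis .
qed


lemma prod_opt: "finite S \<Longrightarrow> (\<Prod>x\<in>S. f x) = (if y \<in> S then f y else 1) * (\<Prod>x\<in>S - {y}. f x)"
  by (auto simp: prod.remove)

lemma Ppr_cong': "(\<And>u. u \<noteq> r \<Longrightarrow> p (l, u) = q (l, u)) \<Longrightarrow> Ppr a l r p x = Ppr a l r q x"
  unfolding Ppr_def by (intro prod.cong) auto

lemma vanish:
  assumes j: "1 \<le> j" "j < min al be" and s: "s \<in> {1..a j}" and i: "1 \<le> i"
    and c: "(i \<noteq> j \<and> i \<noteq> Suc j) \<or> (i = j \<and> \<not> (r j = s \<and> r' j = s))"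
  shows "Hf a al be i r r' (p (j, s) + 1) p = 0"
proof (cases "j \<in> Lset al be i r r'")
  case True
  have "Pp a j p (p (j, s) + 1 - 1) = 0" using Pp_zero[of s a j p] s by simp
  then have "(\<Prod>l\<in>Lset al be i r r'. Pp a l p (p (j, s) + 1 - 1)) = 0"
    using True by (intro prod_zero) (auto simp: Lset_def)
  then show ?thesis unfolding Hf_def by simp
next
  case False
  then have "i = j" "dg al be i r r'" using c j unfolding Lset_def by (auto split: if_splits)
  then have "r j \<noteq> s" using c unfolding dg_def by auto
  then have "Ppr a j (r j) p (p (j, s)) = 0" using Ppr_zero[of s a j "r j" p] s by metis
  then show ?thesis unfolding Hf_def using \<open>i = j\<close> \<open>dg al be i r r'\<close> by simp
qed

lemma fA_split:
  assumes j: "j < al" and s: "s \<in> {1..a j}"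
  shows "fA a al j (\<rho>(j := s)) p = fA a al (Suc j) \<rho> p *
     (if Suc j < al then Ppr a (Suc j) (\<rho> (Suc j)) p (p (j, s) + 1) else Pp a al p (p (j, s) + 1)) / Ppr a j s p (p (j, s))"
proof -
  define r where "r = \<rho>(j := s)"
  have d1: "(\<Prod>k\<in>{j..<al}. Ppr a k (r k) p (p (k, r k))) = Ppr a j s p (p (j, s)) * (\<Prod>k\<in>{Suc j..<al}. Ppr a k (\<rho> k) p (p (k, \<rho> k)))"
  proof -
    have "(\<Prod>k\<in>{j..<al}. Ppr a k (r k) p (p (k, r k))) = Ppr a j (r j) p (p (j, r j)) * (\<Prod>k\<in>{Suc j..<al}. Ppr a k (r k) p (p (k, r k)))"
      using j by (rule prod.atLeast_Suc_lessThan)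
    also have "(\<Prod>k\<in>{Suc j..<al}. Ppr a k (r k) p (p (k, r k))) = (\<Prod>k\<in>{Suc j..<al}. Ppr a k (\<rho> k) p (p (k, \<rho> k)))"
      by (intro prod.cong) (auto simp: r_def)
    finally show ?thesis by (simp add: r_def)
  qed
  show ?thesis
  proof (cases "Suc j < al")
    case True
    have n1: "(\<Prod>k\<in>{j + 1..<al}. Ppr a k (r k) p (p (k - 1, r (k - 1)) + 1)) = Ppr a (Suc j) (\<rho> (Suc j)) p (p (j, s) + 1)
        * (\<Prod>k\<in>{Suc j + 1..<al}. Ppr a k (\<rho> k) p (p (k - 1, \<rho> (k - 1)) + 1))"
    proof -
      have "(\<Prod>k\<in>{Suc j..<al}. Ppr a k (r k) p (p (k - 1, r (k - 1)) + 1)) = Ppr a (Suc j) (r (Suc j)) p (p (Suc j - 1, r (Suc j - 1)) + 1)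
         * (\<Prod>k\<in>{Suc (Suc j)..<al}. Ppr a k (r k) p (p (k - 1, r (k - 1)) + 1))"
        using True by (rule prod.atLeast_Suc_lessThan)
      also have "(\<Prod>k\<in>{Suc (Suc j)..<al}. Ppr a k (r k) p (p (k - 1, r (k - 1)) + 1)) = (\<Prod>k\<in>{Suc (Suc j)..<al}. Ppr a k (\<rho> k) p (p (k - 1, \<rho> (k - 1)) + 1))"
        by (intro prod.cong) (auto simp: r_def)
      finally show ?thesis by (simp add: r_def)
    qed
    have h: "r (al - 1) = \<rho> (al - 1)" using True by (auto simp: r_def)
    have "fA a al j r p = (Pp a al p (p (al - 1, \<rho> (al - 1)) + 1) * (Ppr a (Suc j) (\<rho> (Suc j)) p (p (j, s) + 1)
        * (\<Prod>k\<in>{Suc j + 1..<al}. Ppr a k (\<rho> k) p (p (k - 1, \<rho> (k - 1)) + 1))))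
        / (Ppr a j s p (p (j, s)) * (\<Prod>k\<in>{Suc j..<al}. Ppr a k (\<rho> k) p (p (k, \<rho> k))))"
      unfolding fA_def using j by (simp only: if_True n1 d1 h)
    moreover have "fA a al (Suc j) \<rho> p = (Pp a al p (p (al - 1, \<rho> (al - 1)) + 1)
        * (\<Prod>k\<in>{Suc j + 1..<al}. Ppr a k (\<rho> k) p (p (k - 1, \<rho> (k - 1)) + 1)))
        / (\<Prod>k\<in>{Suc j..<al}. Ppr a k (\<rho> k) p (p (k, \<rho> k)))"
      unfolding fA_def using True by simp
    ultimately show ?thesis using True by (simp add: r_def[symmetric] field_simps)
  next
    case False
    then have al: "al = Suc j" using j by simp
    have "fA a al j r p = Pp a al p (p (j, s) + 1) / Ppr a j s p (p (j, s))"
      unfolding fA_def using j d1 al by (simp add: r_def)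
    moreover have "fA a al (Suc j) \<rho> p = 1" unfolding fA_def using al by simp
    ultimately show ?thesis using False by (simp add: r_def[symmetric])
  qed
qed


lemma p1_facts:
  assumes j: "j < al"
  shows "shp j al (\<rho>(j := s)) p (j, s) = p (j, s) + 1"
    and "u \<noteq> s \<Longrightarrow> shp j al (\<rho>(j := s)) p (j, u) = p (j, u)"
    and "l < j \<Longrightarrow> shp j al (\<rho>(j := s)) p (l, u) = p (l, u)"
    and "Suc j \<le> l \<Longrightarrow> shp j al (\<rho>(j := s)) p (l, u) = shp (Suc j) al \<rho> p (l, u)"
  using j by (auto simp: shp_at)

lemma p2_fact: "l \<le> j \<Longrightarrow> shp (Suc j) al \<rho> p (l, u) = p (l, u)"
  by (auto simp: shp_at)

lemma eB_split:
  assumes j: "j < al" "Suc j < be" and j0: "1 \<le> j"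
  shows "\<exists>E. eB Ds a be j (\<rho>'(j := s)) (shp j al (\<rho>(j := s)) p) =
      E * Pp a (j - 1) p (p (j, s)) * Ppr a j s p (shp (Suc j) al \<rho> p (Suc j, \<rho>' (Suc j)) - 1) * Zf Ds j (p (j, s) + 1) / Ppr a j s p (p (j, s) + 1)
    \<and> eB Ds a be (Suc j) \<rho>' (shp (Suc j) al \<rho> p) = E * Pp a j p (shp (Suc j) al \<rho> p (Suc j, \<rho>' (Suc j)) - 1)"
proof -
  define p1 where "p1 = shp j al (\<rho>(j := s)) p"
  define p2 where "p2 = shp (Suc j) al \<rho> p"
  define r' where "r' = \<rho>'(j := s)"
  define v where "v = p2 (Suc j, \<rho>' (Suc j))"
  note pf = p1_facts[OF j(1), where \<rho>=\<rho> and s=s and p=p, folded p1_def p2_def]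
  define En where "En = (\<Prod>k\<in>{Suc j..<be - 1}. Ppr a k (\<rho>' k) p2 (p2 (k + 1, \<rho>' (k + 1)) - 1))"
  define Ed where "Ed = (\<Prod>k\<in>{Suc j..<be}. Ppr a k (\<rho>' k) p2 (p2 (k, \<rho>' k)))"
  define EZ where "EZ = (\<Prod>k\<in>{Suc j..<be}. Zf Ds k (p2 (k, \<rho>' k)))"
  have N1: "(\<Prod>k\<in>{j..<be - 1}. Ppr a k (r' k) p1 (p1 (k + 1, r' (k + 1)) - 1)) = Ppr a j s p (v - 1) * En"
  proof -
    have "(\<Prod>k\<in>{j..<be - 1}. Ppr a k (r' k) p1 (p1 (k + 1, r' (k + 1)) - 1))
        = Ppr a j (r' j) p1 (p1 (j + 1, r' (j + 1)) - 1) * (\<Prod>k\<in>{Suc j..<be - 1}. Ppr a k (r' k) p1 (p1 (k + 1, r' (k + 1)) - 1))"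
      using j by (intro prod.atLeast_Suc_lessThan) simp
    also have "Ppr a j (r' j) p1 (p1 (j + 1, r' (j + 1)) - 1) = Ppr a j s p (v - 1)"
      unfolding r'_def v_def using pf(4)[of "Suc j"] by (simp add: Ppr_cong'[where r=s and p=p1 and q=p and l=j] pf(2))
    also have "(\<Prod>k\<in>{Suc j..<be - 1}. Ppr a k (r' k) p1 (p1 (k + 1, r' (k + 1)) - 1)) = En"
      unfolding En_def r'_def
      by (intro prod.cong refl) (simp add: pf(4) Ppr_cong[where p=p1 and q=p2])
    finally show ?thesis .
  qed
  have D1: "(\<Prod>k\<in>{j..<be}. Ppr a k (r' k) p1 (p1 (k, r' k))) = Ppr a j s p (p (j, s) + 1) * Ed"
  proof -
    have "(\<Prod>k\<in>{j..<be}. Ppr a k (r' k) p1 (p1 (k, r' k))) = Ppr a j (r' j) p1 (p1 (j, r' j)) * (\<Prod>k\<in>{Suc j..<be}. Ppr a k (r' k) p1 (p1 (k, r' k)))"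
      using j by (intro prod.atLeast_Suc_lessThan) simp
    also have "Ppr a j (r' j) p1 (p1 (j, r' j)) = Ppr a j s p (p (j, s) + 1)"
      unfolding r'_def by (simp add: Ppr_cong'[where r=s and p=p1 and q=p and l=j] pf(1,2))
    also have "(\<Prod>k\<in>{Suc j..<be}. Ppr a k (r' k) p1 (p1 (k, r' k))) = Ed"
      unfolding Ed_def r'_def by (intro prod.cong refl) (simp add: pf(4) Ppr_cong[where p=p1 and q=p2])
    finally show ?thesis .
  qed
  have Z1: "(\<Prod>k\<in>{j..<be}. Zf Ds k (p1 (k, r' k))) = Zf Ds j (p (j, s) + 1) * EZ"
  proof -
    have "(\<Prod>k\<in>{j..<be}. Zf Ds k (p1 (k, r' k))) = Zf Ds j (p1 (j, r' j)) * (\<Prod>k\<in>{Suc j..<be}. Zf Ds k (p1 (k, r' k)))"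
      using j by (intro prod.atLeast_Suc_lessThan) simp
    also have "(\<Prod>k\<in>{Suc j..<be}. Zf Ds k (p1 (k, r' k))) = EZ"
      unfolding EZ_def r'_def by (intro prod.cong refl) (simp add: pf(4))
    finally show ?thesis unfolding r'_def by (simp add: pf(1))
  qed
  have P0: "Pp a (j - 1) p1 (p1 (j, r' j) - 1) = Pp a (j - 1) p (p (j, s))"
    unfolding r'_def using j j0 by (simp add: pf(1)) (rule Pp_cong, simp add: pf(3))
  have e1: "eB Ds a be j r' p1 = - (Pp a (j - 1) p (p (j, s)) * (Ppr a j s p (v - 1) * En)) / (Ppr a j s p (p (j, s) + 1) * Ed)
       * (Zf Ds j (p (j, s) + 1) * EZ)"
    unfolding eB_def using j by (simp only: if_True N1 D1 Z1 P0) simp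
  have P1: "Pp a j p2 (p2 (Suc j, \<rho>' (Suc j)) - 1) = Pp a j p (v - 1)"
    unfolding v_def p2_def by (rule Pp_cong) (simp add: p2_fact)
  have e2: "eB Ds a be (Suc j) \<rho>' p2 = - (Pp a j p (v - 1) * En) / Ed * EZ"
    unfolding eB_def En_def[symmetric] Ed_def[symmetric] EZ_def[symmetric] using j by (simp add: P1)
  show ?thesis
    by (rule exI[of _ "- En / Ed * EZ"]) (simp add: e1[unfolded p1_def r'_def v_def] e2[unfolded p2_def v_def] p2_def field_simps)
qed

lemma eB_split_last:
  assumes j: "j < al" "Suc j = be" and j0: "1 \<le> j"
  shows "eB Ds a be j (\<rho>'(j := s)) (shp j al (\<rho>(j := s)) p) =
      - Pp a (j - 1) p (p (j, s)) / Ppr a j s p (p (j, s) + 1) * Zf Ds j (p (j, s) + 1)"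
    and "eB Ds a be (Suc j) \<rho>' (shp (Suc j) al \<rho> p) = 1"
proof -
  define p1 where "p1 = shp j al (\<rho>(j := s)) p"
  note pf = p1_facts[OF j(1), where \<rho>=\<rho> and s=s and p=p, folded p1_def]
  have "Ppr a j s p1 (p1 (j, s)) = Ppr a j s p (p (j, s) + 1)" by (simp add: Ppr_cong'[where r=s and p=p1 and q=p and l=j] pf(1,2))
  moreover have "Pp a (j - 1) p1 (p1 (j, s) - 1) = Pp a (j - 1) p (p (j, s))" using j j0 by (simp add: pf(1)) (rule Pp_cong, simp add: pf(3))
  ultimately show "eB Ds a be j (\<rho>'(j := s)) p1 = - Pp a (j - 1) p (p (j, s)) / Ppr a j s p (p (j, s) + 1) * Zf Ds j (p (j, s) + 1)"
    unfolding eB_def using j pf(1) by (simp add: j(2)[symmetric])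
  show "eB Ds a be (Suc j) \<rho>' (shp (Suc j) al \<rho> p) = 1" unfolding eB_def using j by simp
qed


lemma pair:
  assumes a0: "a 0 = 0" and g: "generic n a p" and j: "1 \<le> j" "Suc j \<le> min al be"
    and aln: "al \<le> n" and ben: "be \<le> n" and s: "s \<in> {1..a j}"
    and \<rho>: "\<rho> \<in> tuples a (Suc j) al" and \<rho>': "\<rho>' \<in> tuples a (Suc j) be"
  shows "Ntm Ds a al be j (\<rho>(j := s)) (\<rho>'(j := s)) (p (j, s) + 1) p + Ntm Ds a al be (Suc j) \<rho> \<rho>' (p (j, s) + 1) p = 0"
proof -
  define w where "w = p (j, s) + 1"
  define m where "m = min al be"
  have jal: "j < al" and jbe: "j < be" and jn: "j < n" using j aln by auto
  define F where "F = fA a al (Suc j) \<rho> p"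
  define Pq where "Pq = Ppr a j s p (p (j, s))"
  define Pw where "Pw = Ppr a j s p w"
  have Pqnz: "Pq \<noteq> 0" unfolding Pq_def using Ppr_nz0[OF g j(1) jn s] .
  have Pwnz: "Pw \<noteq> 0" unfolding Pw_def w_def using Ppr_nz1[OF g j(1) jn s] .
  define Xf where "Xf = (if Suc j < al then Ppr a (Suc j) (\<rho> (Suc j)) p w else Pp a al p w)"
  have fj: "fA a al j (\<rho>(j := s)) p = F * Xf / Pq"
    unfolding F_def Xf_def Pq_def w_def by (rule fA_split[where a=a and j=j and s=s and al=al and \<rho>=\<rho> and p=p, OF jal s])
  define ZZ where "ZZ = (\<Prod>k\<in>{1..<j}. Zf Ds k w)"
  define Zj where "Zj = Zf Ds j w"
  have ZZ1: "(\<Prod>k\<in>{1..<Suc j}. Zf Ds k w) = ZZ * Zj"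
  proof -
    have "{1..<Suc j} = insert j {1..<j}" using j by auto
    then show ?thesis unfolding ZZ_def Zj_def by (simp add: mult.commute)
  qed
  define Pj1 where "Pj1 = Pp a (j - 1) p (p (j, s))"
  define K0 where "K0 = (\<Prod>l\<in>{1..<m} - {j - 1} - {j} - {Suc j}. Pp a l p (w - 1))"
  define P1 where "P1 = Pp a (Suc j) p (w - 1)"
  have Kj: "(\<Prod>l\<in>{1..<m} - {j - 1} - {j}. Pp a l p (w - 1)) = (if Suc j < m then P1 else 1) * K0"
  proof -
    have c: "Suc j \<in> {1..<m} - {j - 1} - {j} \<longleftrightarrow> Suc j < m" by auto
    have "(\<Prod>l\<in>{1..<m} - {j - 1} - {j}. Pp a l p (w - 1)) = (if Suc j \<in> {1..<m} - {j - 1} - {j} then Pp a (Suc j) p (w - 1) else 1)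
       * (\<Prod>l\<in>{1..<m} - {j - 1} - {j} - {Suc j}. Pp a l p (w - 1))" by (rule prod_opt) simp
    then show ?thesis unfolding K0_def P1_def c .
  qed
  have Hj: "Hf a al be j (\<rho>(j := s)) (\<rho>'(j := s)) w p = Pw * ((if Suc j < m then P1 else 1) * K0) * Pq"
  proof -
    have dgj: "dg al be j (\<rho>(j := s)) (\<rho>'(j := s))" unfolding dg_def using jal jbe by simp
    have U: "Uset a al be j (\<rho>(j := s)) (\<rho>'(j := s)) = {1..a j} - {s}" unfolding Uset_def using jal jbe by auto
    have L: "Lset al be j (\<rho>(j := s)) (\<rho>'(j := s)) = {1..<m} - {j - 1} - {j}" unfolding Lset_def m_def using dgj by simp
    show ?thesis unfolding Hf_def U L Kj[symmetric] using dgj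
      by (simp add: Pw_def Pq_def Ppr_def w_def)
  qed
  have Nj: "Ntm Ds a al be j (\<rho>(j := s)) (\<rho>'(j := s)) w p = F * Xf / Pq * eB Ds a be j (\<rho>'(j := s)) (shp j al (\<rho>(j := s)) p)
      * ZZ * (Pw * ((if Suc j < m then P1 else 1) * K0) * Pq)"
    unfolding Ntm_def fj Hj ZZ_def by simp
  define Y where "Y = (\<Prod>u\<in>Uset a al be (Suc j) \<rho> \<rho>'. w - p (Suc j, u))"
  define dg' where "dg' = dg al be (Suc j) \<rho> \<rho>'"
  define Q1 where "Q1 = Ppr a (Suc j) (\<rho> (Suc j)) p (w - 1)"
  have KL: "(\<Prod>l\<in>Lset al be (Suc j) \<rho> \<rho>'. Pp a l p (w - 1)) = Pj1 * ((if Suc j < m \<and> \<not> dg' then P1 else 1) * K0)"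
  proof -
    have Pj1': "(if j - 1 \<in> {1..<m} - {j} - (if dg' then {Suc j} else {}) then Pp a (j - 1) p (w - 1) else 1) = Pj1"
    proof (cases "j = 1")
      case True then show ?thesis unfolding Pj1_def by (simp add: Pp_empty a0)
    next
      case False then show ?thesis unfolding Pj1_def w_def using j by (auto simp: m_def)
    qed
    have S: "{1..<m} - {j} - (if dg' then {Suc j} else {}) - {j - 1} - {Suc j} = {1..<m} - {j - 1} - {j} - {Suc j}" by auto
    have "(\<Prod>l\<in>Lset al be (Suc j) \<rho> \<rho>'. Pp a l p (w - 1)) = Pj1 * (\<Prod>l\<in>{1..<m} - {j} - (if dg' then {Suc j} else {}) - {j - 1}. Pp a l p (w - 1))"
      unfolding Lset_def dg'_def[symmetric] m_def[symmetric] Pj1'[symmetric] diff_Suc_1 by (rule prod_opt) simp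
    also have "(\<Prod>l\<in>{1..<m} - {j} - (if dg' then {Suc j} else {}) - {j - 1}. Pp a l p (w - 1)) = (if Suc j < m \<and> \<not> dg' then P1 else 1) * K0"
    proof -
      have c: "Suc j \<in> {1..<m} - {j} - (if dg' then {Suc j} else {}) - {j - 1} \<longleftrightarrow> Suc j < m \<and> \<not> dg'" by auto
      have "(\<Prod>l\<in>{1..<m} - {j} - (if dg' then {Suc j} else {}) - {j - 1}. Pp a l p (w - 1)) =
         (if Suc j \<in> {1..<m} - {j} - (if dg' then {Suc j} else {}) - {j - 1} then Pp a (Suc j) p (w - 1) else 1)
       * (\<Prod>l\<in>{1..<m} - {j} - (if dg' then {Suc j} else {}) - {j - 1} - {Suc j}. Pp a l p (w - 1))" by (rule prod_opt) simp
      then show ?thesis unfolding K0_def P1_def S c .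
    qed
    finally show ?thesis .
  qed
  have Nj1: "Ntm Ds a al be (Suc j) \<rho> \<rho>' w p = F * eB Ds a be (Suc j) \<rho>' (shp (Suc j) al \<rho> p) * (ZZ * Zj)
      * (Y * (Pj1 * ((if Suc j < m \<and> \<not> dg' then P1 else 1) * K0)) * (if dg' then Q1 else 1))"
    unfolding Ntm_def F_def[symmetric] ZZ1 Hf_def KL Y_def[symmetric] dg'_def[symmetric] Q1_def[symmetric] by simp
  define v where "v = shp (Suc j) al \<rho> p (Suc j, \<rho>' (Suc j))"
  have \<rho>1: "Suc j < al \<Longrightarrow> \<rho> (Suc j) \<in> {1..a (Suc j)}" using \<rho> tuples_in by (metis atLeastLessThan_iff order_refl)
  have \<rho>1': "Suc j < be \<Longrightarrow> \<rho>' (Suc j) \<in> {1..a (Suc j)}" using \<rho>' tuples_in by (metis atLeastLessThan_iff order_refl)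
  have Pjv: "Pp a j p (v - 1) = (v - w) * Ppr a j s p (v - 1)"
    using Pp_remove[of s a j p "v - 1"] s by (simp add: w_def algebra_simps)
  define Rv where "Rv = Ppr a j s p (v - 1)"
  have main: "Ntm Ds a al be j (\<rho>(j := s)) (\<rho>'(j := s)) w p + Ntm Ds a al be (Suc j) \<rho> \<rho>' w p = 0"
  proof (cases "Suc j < be")
    case be: True
    obtain E where E: "eB Ds a be j (\<rho>'(j := s)) (shp j al (\<rho>(j := s)) p) = E * Pj1 * Rv * Zj / Pw"
      "eB Ds a be (Suc j) \<rho>' (shp (Suc j) al \<rho> p) = E * ((v - w) * Rv)"
      using eB_split[OF jal be j(1), of Ds a \<rho>' s \<rho> p] unfolding Pj1_def Rv_def Zj_def Pw_def w_def v_def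
      by (auto simp: Pjv[unfolded v_def w_def])
    show ?thesis
    proof (cases "Suc j < al")
      case al: True
      have mm: "Suc j < m" using al be m_def by simp
      show ?thesis
      proof (cases dg')
        case False
        have ne: "\<rho> (Suc j) \<noteq> \<rho>' (Suc j)" using False al be unfolding dg'_def dg_def by auto
        have vv: "v = p (Suc j, \<rho>' (Suc j))" unfolding v_def using ne by (simp add: shp_at)
        have U: "Uset a al be (Suc j) \<rho> \<rho>' = {1..a (Suc j)} - {\<rho> (Suc j)} - {\<rho>' (Suc j)}"
          unfolding Uset_def using al be by simp
        have X: "Xf = (w - v) * Y" unfolding Xf_def Y_def U vv using al
          by (simp add: Ppr_remove[where a=a and l="Suc j" and u="\<rho>' (Suc j)" and r="\<rho> (Suc j)", OF \<rho>1'[OF be] ne[symmetric]])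
        show ?thesis unfolding Nj Nj1 E X using False mm Pqnz Pwnz by (simp add: field_simps)
      next
        case True
        have eq: "\<rho>' (Suc j) = \<rho> (Suc j)" using True unfolding dg'_def dg_def by auto
        have vv: "v = p (Suc j, \<rho> (Suc j)) + 1" unfolding v_def using eq al by (simp add: shp_at)
        have U: "Uset a al be (Suc j) \<rho> \<rho>' = {1..a (Suc j)} - {\<rho> (Suc j)}"
          unfolding Uset_def using al be eq by auto
        have X: "Xf = Y" unfolding Xf_def Y_def U using al by (simp add: Ppr_def)
        have PP1: "P1 = (w - v) * Q1" unfolding P1_def Q1_def vv
          using Pp_remove[where a=a and l="Suc j" and u="\<rho> (Suc j)" and p=p and x="w - 1", OF \<rho>1[OF al]] by (simp add: algebra_simps)
        show ?thesis unfolding Nj Nj1 E X PP1 using True mm Pqnz Pwnz by (simp add: field_simps)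
      qed
    next
      case al: False
      have al1: "al = Suc j" using al jal by simp
      have mm: "m = Suc j" using al1 be m_def by simp
      have F1: "F = 1" unfolding F_def fA_def using al1 by simp
      have ndg: "\<not> dg'" unfolding dg'_def dg_def using al1 by simp
      have vv: "v = p (Suc j, \<rho>' (Suc j))" unfolding v_def using al1 by (simp add: shp_at)
      have U: "Uset a al be (Suc j) \<rho> \<rho>' = {1..a (Suc j)} - {\<rho>' (Suc j)}"
        unfolding Uset_def using al1 be by simp
      have X: "Xf = (w - v) * Y" unfolding Xf_def Y_def U vv using al1
        by (simp add: Pp_remove[where a=a and l="Suc j" and u="\<rho>' (Suc j)", OF \<rho>1'[OF be]] Ppr_def)
      show ?thesis unfolding Nj Nj1 E X F1 mm using ndg Pqnz Pwnz by (simp add: field_simps)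
    qed
  next
    case be: False
    have be1: "be = Suc j" using be jbe by simp
    have E: "eB Ds a be j (\<rho>'(j := s)) (shp j al (\<rho>(j := s)) p) = - Pj1 / Pw * Zj"
      "eB Ds a be (Suc j) \<rho>' (shp (Suc j) al \<rho> p) = 1"
      using eB_split_last(1)[OF jal be1[symmetric] j(1), where Ds=Ds and a=a and \<rho>'=\<rho>' and s=s and \<rho>=\<rho> and p=p]
        eB_split_last(2)[OF jal be1[symmetric] j(1), where Ds=Ds and a=a and \<rho>'=\<rho>' and \<rho>=\<rho> and p=p]
      unfolding Pj1_def Pw_def Zj_def w_def by auto
    have mm: "m = Suc j" using be1 jal m_def by simp
    have ndg: "\<not> dg'" unfolding dg'_def dg_def using be1 by simp
    have X: "Xf = Y"
    proof (cases "Suc j < al")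
      case True
      have U: "Uset a al be (Suc j) \<rho> \<rho>' = {1..a (Suc j)} - {\<rho> (Suc j)}" unfolding Uset_def using True be1 by simp
      show ?thesis unfolding Xf_def Y_def U using True by (simp add: Ppr_def)
    next
      case False
      then have al1: "al = Suc j" using jal by simp
      have U: "Uset a al be (Suc j) \<rho> \<rho>' = {1..a (Suc j)}" unfolding Uset_def using al1 be1 by simp
      show ?thesis unfolding Xf_def Y_def U using al1 by (simp add: Pp_def)
    qed
    show ?thesis unfolding Nj Nj1 E X mm using ndg Pqnz Pwnz by (simp add: field_simps)
  qed
  then show ?thesis by (simp add: w_def)
qed


definition Nsum :: "divisor_pts \<Rightarrow> (nat \<Rightarrow> nat) \<Rightarrow> nat \<Rightarrow> nat \<Rightarrow> shift \<Rightarrow> complex \<Rightarrow> pvar \<Rightarrow> complex" where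
  "Nsum Ds a al be k z p = (\<Sum>i\<in>{1..min al be}. \<Sum>r\<in>tuples a i al. \<Sum>r'\<in>tuples a i be.
      if snd (ct Ds a al be i r r') = k then Ntm Ds a al be i r r' z p else 0)"

context
  fixes n :: nat and a :: "nat \<Rightarrow> nat" and Ds :: divisor_pts
  assumes a0: "a 0 = 0" and an: "a n = 0" and pts1: "\<forall>(i, g, x) \<in> set Ds. i \<noteq> 0 \<longrightarrow> g = 1"
begin

lemma pf_var': "l \<le> n \<Longrightarrow> u \<in> {1..a l} \<Longrightarrow> (\<lambda>p. p (l, u)) \<in> polyfun n a"
proof -
  assume l: "l \<le> n" and u: "u \<in> {1..a l}"
  have "l \<noteq> 0"
  proof
    assume "l = 0" then show False using u a0 by simp
  qed
  moreover have "l \<noteq> n"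
  proof
    assume "l = n" then show False using u an by simp
  qed
  ultimately show ?thesis using l u by (intro polyfun.var) auto
qed

lemma pf_Pp: "l \<le> n \<Longrightarrow> X \<in> polyfun n a \<Longrightarrow> (\<lambda>p. Pp a l p (X p)) \<in> polyfun n a"
  unfolding Pp_def by (intro pf_prod pf_diff pf_var') auto

lemma pf_Ppr: "l \<le> n \<Longrightarrow> X \<in> polyfun n a \<Longrightarrow> (\<lambda>p. Ppr a l r p (X p)) \<in> polyfun n a"
  unfolding Ppr_def by (intro pf_prod pf_diff pf_var') auto

lemma Zf_poly: "1 \<le> k \<Longrightarrow> Zf Ds k x = prod_list (map (\<lambda>(i, g, y). if i = k then x - y else 1) Ds)"
proof -
  assume k: "1 \<le> k"
  have eq: "map (\<lambda>(i, g, y). if i = k then (x - y) powi g else 1) Ds = map (\<lambda>(i, g, y). if i = k then x - y else 1) Ds"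
  proof (rule map_cong[OF refl])
    fix e assume "e \<in> set Ds"
    then show "(\<lambda>(i, g, y). if i = k then (x - y) powi g else 1) e = (\<lambda>(i, g, y). if i = k then x - y else 1) e"
      using pts1 k by (cases e) auto
  qed
  show ?thesis unfolding Zf_def eq ..
qed

lemma pf_if: "(c \<Longrightarrow> P \<in> polyfun n a) \<Longrightarrow> (\<not> c \<Longrightarrow> Q \<in> polyfun n a) \<Longrightarrow> (\<lambda>p. if c then P p else Q p) \<in> polyfun n a"
  by (cases c) auto

lemma lpoly_if: "(c \<Longrightarrow> lpoly n a P) \<Longrightarrow> (\<not> c \<Longrightarrow> lpoly n a Q) \<Longrightarrow> lpoly n a (\<lambda>z p. if c then P z p else Q z p)"
  by (cases c) auto

lemma pf_prodlist: "(\<And>e. e \<in> set xs \<Longrightarrow> f e \<in> polyfun n a) \<Longrightarrow> (\<lambda>p. prod_list (map (\<lambda>e. f e p) xs)) \<in> polyfun n a"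
proof (induction xs)
  case Nil then show ?case using polyfun.const[of 1] by simp
next
  case (Cons x xs) then show ?case using polyfun.mult[of "f x" n a] by simp
qed

lemma pf_Zf: assumes "1 \<le> k" "X \<in> polyfun n a" shows "(\<lambda>p. Zf Ds k (X p)) \<in> polyfun n a"
proof -
  have "(\<lambda>p. prod_list (map (\<lambda>e. (\<lambda>(i, g, y) p. if i = k then X p - y else 1) e p) Ds)) \<in> polyfun n a"
    by (rule pf_prodlist) (auto split: prod.splits intro!: pf_if pf_diff assms(2) polyfun.const)
  moreover have "\<And>p. Zf Ds k (X p) = prod_list (map (\<lambda>e. (\<lambda>(i, g, y) p. if i = k then X p - y else 1) e p) Ds)"
    unfolding Zf_poly[OF assms(1)] by (intro arg_cong[where f=prod_list] map_cong) auto
  ultimately show ?thesis by simp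
qed

lemma lpoly_prodlist: "(\<And>e. e \<in> set xs \<Longrightarrow> lpoly n a (f e)) \<Longrightarrow> lpoly n a (\<lambda>z p. prod_list (map (\<lambda>e. f e z p) xs))"
proof (induction xs)
  case Nil then show ?case using lpoly_const[OF lr_const[where c=1]] by simp
next
  case (Cons x xs) then show ?case using lpoly_mult[of n a "f x"] by simp
qed

lemma lpoly_Zf: assumes "1 \<le> k" shows "lpoly n a (\<lambda>z p. Zf Ds k z)"
proof -
  have A: "lpoly n a (\<lambda>z p. prod_list (map (\<lambda>e. (\<lambda>(i, g, y) z p. if i = k then z - y else 1) e z p) Ds))"
    by (rule lpoly_prodlist) (auto split: prod.splits intro!: lpoly_if lpoly_zf polyfun.const lpoly_const lr_const)
  have B: "\<And>z p. Zf Ds k z = prod_list (map (\<lambda>e. (\<lambda>(i, g, y) z p. if i = k then z - y else 1) e z p) Ds)"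
    unfolding Zf_poly[OF assms(1)] by (intro arg_cong[where f=prod_list] map_cong) auto
  show ?thesis
  proof (rule lpoly_cong[OF A])
    fix p z show "Zf Ds k z = prod_list (map (\<lambda>e. (\<lambda>(i, g, y) z p. if i = k then z - y else 1) e z p) Ds)" by (rule B)
  qed
qed

lemma lr_invPpr: assumes "1 \<le> k" "k < n" "r \<in> {1..a k}" shows "(\<lambda>p. 1 / Ppr a k r p (p (k, r))) \<in> locring n a"
proof -
  have "(\<lambda>p. \<Prod>u\<in>{1..a k} - {r}. 1 / (p (k, r) - p (k, u) + of_int 0)) \<in> locring n a"
    using assms by (intro lr_prod lr_inv_den) (auto simp: valid_den_def)
  moreover have "\<And>p. 1 / Ppr a k r p (p (k, r)) = (\<Prod>u\<in>{1..a k} - {r}. 1 / (p (k, r) - p (k, u) + of_int 0))"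
    unfolding Ppr_def by (simp add: prod_dividef)
  ultimately show ?thesis by simp
qed

lemma lr_div: "(\<lambda>p. N p) \<in> locring n a \<Longrightarrow> (\<lambda>p. 1 / D p) \<in> locring n a \<Longrightarrow> (\<lambda>p. N p / D p) \<in> locring n a"
  using lr_mult[of N n a "\<lambda>p. 1 / D p"] by simp

lemma lr_fA: assumes i: "1 \<le> i" and al: "al \<le> n" and r: "r \<in> tuples a i al" shows "(\<lambda>p. fA a al i r p) \<in> locring n a"
proof (cases "i < al")
  case True
  have rin: "\<And>k. k \<in> {i..<al} \<Longrightarrow> r k \<in> {1..a k}" using r tuples_in by blast
  have rin': "\<And>k. k \<in> {i + 1..<al} \<Longrightarrow> r (k - 1) \<in> {1..a (k - 1)}" using rin by (metis atLeastLessThan_iff diff_Suc_1 le_diff_conv2 Suc_eq_plus1 less_imp_diff_less le_add2 order_trans Suc_leD)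
  have N: "(\<lambda>p. Pp a al p (p (al - 1, r (al - 1)) + 1) * (\<Prod>k\<in>{i + 1..<al}. Ppr a k (r k) p (p (k - 1, r (k - 1)) + 1))) \<in> locring n a"
    using True al rin rin'
    by (intro lr_pf polyfun.mult pf_Pp pf_prod pf_Ppr polyfun.add pf_var' polyfun.const) auto
  have "(\<lambda>p. \<Prod>k\<in>{i..<al}. 1 / Ppr a k (r k) p (p (k, r k))) \<in> locring n a"
    using rin i al by (intro lr_prod lr_invPpr) auto
  then have D: "(\<lambda>p. 1 / (\<Prod>k\<in>{i..<al}. Ppr a k (r k) p (p (k, r k)))) \<in> locring n a"
    by (simp add: prod_dividef)
  show ?thesis unfolding fA_def using True lr_div[OF N D] by simp
next
  case False then show ?thesis unfolding fA_def using lr_const[where c=1] by simp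
qed

lemma lr_eB: assumes i: "1 \<le> i" and be: "be \<le> n" and r: "r \<in> tuples a i be" shows "(\<lambda>p. eB Ds a be i r p) \<in> locring n a"
proof (cases "i < be")
  case True
  have rin: "\<And>k. k \<in> {i..<be} \<Longrightarrow> r k \<in> {1..a k}" using r tuples_in by blast
  have N: "(\<lambda>p. - (Pp a (i - 1) p (p (i, r i) - 1) * (\<Prod>k\<in>{i..<be - 1}. Ppr a k (r k) p (p (k + 1, r (k + 1)) - 1)))) \<in> locring n a"
    using True be rin
    by (intro lr_pf pf_minus polyfun.mult pf_Pp pf_prod pf_Ppr pf_diff pf_var' polyfun.const) auto
  have "(\<lambda>p. \<Prod>k\<in>{i..<be}. 1 / Ppr a k (r k) p (p (k, r k))) \<in> locring n a"
    using rin i be by (intro lr_prod lr_invPpr) auto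
  then have D: "(\<lambda>p. 1 / (\<Prod>k\<in>{i..<be}. Ppr a k (r k) p (p (k, r k)))) \<in> locring n a"
    by (simp add: prod_dividef)
  have Z: "(\<lambda>p. \<Prod>k\<in>{i..<be}. Zf Ds k (p (k, r k))) \<in> locring n a"
    using rin i be by (intro lr_pf pf_prod pf_Zf pf_var') auto
  show ?thesis unfolding eB_def using True lr_mult[OF lr_div[OF N D] Z] by simp
next
  case False then show ?thesis unfolding eB_def using lr_const[where c=1] by simp
qed

lemma lpoly_Pp: "l \<le> n \<Longrightarrow> lpoly n a (\<lambda>z p. Pp a l p (z - c))"
proof -
  assume l: "l \<le> n"
  have "lpoly n a (\<lambda>z p. \<Prod>u\<in>{1..a l}. z - (p (l, u) + c))"
    using l by (intro lpoly_prod lpoly_zf polyfun.add pf_var' polyfun.const) auto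
  then show ?thesis unfolding Pp_def by (simp add: algebra_simps)
qed

lemma lpoly_Ppr: "l \<le> n \<Longrightarrow> lpoly n a (\<lambda>z p. Ppr a l r p (z - c))"
proof -
  assume l: "l \<le> n"
  have "lpoly n a (\<lambda>z p. \<Prod>u\<in>{1..a l} - {r}. z - (p (l, u) + c))"
    using l by (intro lpoly_prod lpoly_zf polyfun.add pf_var' polyfun.const) auto
  then show ?thesis unfolding Ppr_def by (simp add: algebra_simps)
qed

lemma lpoly_Hf: assumes i: "i \<le> n" "min al be \<le> n"
  shows "lpoly n a (\<lambda>z p. Hf a al be i r r' z p)"
  unfolding Hf_def
proof (intro lpoly_mult lpoly_prod)
  show "\<And>u. u \<in> Uset a al be i r r' \<Longrightarrow> lpoly n a (\<lambda>z p. z - p (i, u))"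
    using i by (intro lpoly_zf pf_var') (auto simp: Uset_def)
  show "\<And>l. l \<in> Lset al be i r r' \<Longrightarrow> lpoly n a (\<lambda>z p. Pp a l p (z - 1))"
    using i by (intro lpoly_Pp) (auto simp: Lset_def)
  show "lpoly n a (\<lambda>z p. if dg al be i r r' then Ppr a i (r i) p (z - 1) else 1)"
    using i lpoly_Ppr[of i "r i" 1] lpoly_const[OF lr_const[where c=1]] by (cases "dg al be i r r'") auto
qed (auto simp: Uset_def Lset_def)

lemma lpoly_Ntm: assumes i: "1 \<le> i" "i \<le> min al be" and al: "al \<le> n" and be: "be \<le> n"
    and r: "r \<in> tuples a i al" and r': "r' \<in> tuples a i be"
  shows "lpoly n a (\<lambda>z p. Ntm Ds a al be i r r' z p)"
proof -
  have c: "(\<lambda>p. fA a al i r p * eB Ds a be i r' (shp i al r p)) \<in> locring n a"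
    unfolding shp_def using i al be r r' by (intro lr_mult lr_fA lr_shift[where c="\<lambda>p. eB Ds a be i r' p"] lr_eB) auto
  have z: "lpoly n a (\<lambda>z p. \<Prod>k\<in>{1..<i}. Zf Ds k z)"
    by (intro lpoly_prod lpoly_Zf) auto
  have h: "lpoly n a (\<lambda>z p. Hf a al be i r r' z p)" using i al be by (intro lpoly_Hf) auto
  show ?thesis unfolding Ntm_def using lpoly_mult[OF lpoly_mult[OF lpoly_const[OF c] z] h] by (simp add: mult.assoc)
qed


lemma lpoly_Nsum: assumes "al \<le> n" "be \<le> n" shows "lpoly n a (\<lambda>z p. Nsum Ds a al be k z p)"
  unfolding Nsum_def using assms
  by (intro lpoly_sum lpoly_if lpoly_Ntm lpoly_const lr_const finite_tuples finite_atLeastAtMost) auto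

lemma Nsum_root:
  assumes g: "generic n a p" and al: "al \<le> n" and be: "be \<le> n" and j: "j \<in> {1..<min al be}" and s: "s \<in> {1..a j}"
  shows "Nsum Ds a al be k (p (j, s) + 1) p = 0"
proof -
  define m where "m = min al be"
  define w where "w = p (j, s) + 1"
  define gg where "gg = (\<lambda>i r r'. if snd (ct Ds a al be i r r') = k then Ntm Ds a al be i r r' w p else 0)"
  define G where "G = (\<lambda>i. \<Sum>r\<in>tuples a i al. \<Sum>r'\<in>tuples a i be. gg i r r')"
  have j1: "1 \<le> j" "j < m" using j m_def by auto
  have gz: "gg i r r' = 0" if "1 \<le> i" "(i \<noteq> j \<and> i \<noteq> Suc j) \<or> (i = j \<and> \<not> (r j = s \<and> r' j = s))" for i r r'
  proof -
    have "Hf a al be i r r' w p = 0" unfolding w_def using vanish[of j al be s a i r r' p] j1 m_def s that by auto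
    then show ?thesis unfolding gg_def Ntm_def by simp
  qed
  have "Nsum Ds a al be k w p = (\<Sum>i\<in>{1..m}. G i)" unfolding Nsum_def G_def gg_def m_def ..
  also have "\<dots> = (\<Sum>i\<in>{j, Suc j}. G i)"
  proof (rule sum.mono_neutral_right)
    show "{j, Suc j} \<subseteq> {1..m}" using j1 by auto
    show "\<forall>i\<in>{1..m} - {j, Suc j}. G i = 0" unfolding G_def using gz by auto
  qed simp
  also have "\<dots> = G j + G (Suc j)" by simp
  also have "G j = (\<Sum>\<rho>\<in>tuples a (Suc j) al. \<Sum>\<rho>'\<in>tuples a (Suc j) be. gg j (\<rho>(j := s)) (\<rho>'(j := s)))"
  proof -
    have "G j = (\<Sum>r\<in>{r \<in> tuples a j al. r j = s}. \<Sum>r'\<in>tuples a j be. gg j r r')"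
      unfolding G_def
    proof (rule sum.mono_neutral_right)
      show "\<forall>r\<in>tuples a j al - {r \<in> tuples a j al. r j = s}. (\<Sum>r'\<in>tuples a j be. gg j r r') = 0"
        using gz j1 by auto
    qed (auto simp: finite_tuples)
    also have "\<dots> = (\<Sum>r\<in>{r \<in> tuples a j al. r j = s}. \<Sum>r'\<in>{r' \<in> tuples a j be. r' j = s}. gg j r r')"
    proof (rule sum.cong[OF refl], rule sum.mono_neutral_right)
      fix r assume "r \<in> {r \<in> tuples a j al. r j = s}"
      then show "\<forall>r'\<in>tuples a j be - {r' \<in> tuples a j be. r' j = s}. gg j r r' = 0"
        using gz j1 by auto
    qed (auto simp: finite_tuples)
    also have "\<dots> = (\<Sum>\<rho>\<in>tuples a (Suc j) al. \<Sum>r'\<in>{r' \<in> tuples a j be. r' j = s}. gg j (\<rho>(j := s)) r')"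
      using sum.reindex_bij_betw[OF tuples_bij[of j al s a], of "\<lambda>r. \<Sum>r'\<in>{r' \<in> tuples a j be. r' j = s}. gg j r r'"]
        j1 s m_def by simp
    also have "\<dots> = (\<Sum>\<rho>\<in>tuples a (Suc j) al. \<Sum>\<rho>'\<in>tuples a (Suc j) be. gg j (\<rho>(j := s)) (\<rho>'(j := s)))"
    proof (rule sum.cong[OF refl])
      fix \<rho>
      show "(\<Sum>r'\<in>{r' \<in> tuples a j be. r' j = s}. gg j (\<rho>(j := s)) r') = (\<Sum>\<rho>'\<in>tuples a (Suc j) be. gg j (\<rho>(j := s)) (\<rho>'(j := s)))"
        using sum.reindex_bij_betw[OF tuples_bij[of j be s a], of "\<lambda>r'. gg j (\<rho>(j := s)) r'"] j1 s m_def by simp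
    qed
    finally show ?thesis .
  qed
  also have "G (Suc j) = (\<Sum>\<rho>\<in>tuples a (Suc j) al. \<Sum>\<rho>'\<in>tuples a (Suc j) be. gg (Suc j) \<rho> \<rho>')" unfolding G_def ..
  also have "(\<Sum>\<rho>\<in>tuples a (Suc j) al. \<Sum>\<rho>'\<in>tuples a (Suc j) be. gg j (\<rho>(j := s)) (\<rho>'(j := s)))
     + (\<Sum>\<rho>\<in>tuples a (Suc j) al. \<Sum>\<rho>'\<in>tuples a (Suc j) be. gg (Suc j) \<rho> \<rho>') = 0"
  proof -
    have "gg j (\<rho>(j := s)) (\<rho>'(j := s)) + gg (Suc j) \<rho> \<rho>' = 0"
      if r: "\<rho> \<in> tuples a (Suc j) al" and r': "\<rho>' \<in> tuples a (Suc j) be" for \<rho> \<rho>'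
    proof -
      have jal: "j < al" "j < be" "Suc j \<le> al" "Suc j \<le> be" using j1 m_def by auto
      have sh: "snd (ct Ds a al be j (\<rho>(j := s)) (\<rho>'(j := s))) = snd (ct Ds a al be (Suc j) \<rho> \<rho>')"
        unfolding ct_snd[OF less_imp_le[OF jal(1)] less_imp_le[OF jal(2)]] ct_snd[OF jal(3) jal(4)]
        by (rule ext) (simp add: qsum_split[OF jal(1)] qsum_split[OF jal(2)])
      have "Ntm Ds a al be j (\<rho>(j := s)) (\<rho>'(j := s)) w p + Ntm Ds a al be (Suc j) \<rho> \<rho>' w p = 0"
        unfolding w_def using pair[OF a0 g j1(1) _ al be s r r'] j1 m_def by simp
      then show ?thesis unfolding gg_def sh by simp
    qed
    then show ?thesis by (simp add: sum.distrib[symmetric])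
  qed
  finally show ?thesis unfolding w_def .
qed

lemma T_eq:
  assumes al: "al \<le> n" and be: "be \<le> n" and z0: "Zf Ds 0 z \<noteq> 0"
    and zb: "\<And>l u. l \<le> n \<Longrightarrow> u \<in> {1..a l} \<Longrightarrow> z \<noteq> p (l, u) \<and> z \<noteq> p (l, u) + 1"
  shows "Tcoeff Ds a al be k z p / Zf Ds 0 z * Dd a (min al be) z p = Nsum Ds a al be k z p"
proof -
  have "Tcoeff Ds a al be k z p = (\<Sum>i\<in>{1..min al be}. \<Sum>r\<in>tuples a i al. \<Sum>r'\<in>tuples a i be.
      if snd (ct Ds a al be i r r') = k then fst (ct Ds a al be i r r') z p else 0)"
    unfolding Tcoeff_def ct_def by (simp add: split_beta)
  then have "Tcoeff Ds a al be k z p / Zf Ds 0 z * Dd a (min al be) z p = (\<Sum>i\<in>{1..min al be}. \<Sum>r\<in>tuples a i al. \<Sum>r'\<in>tuples a i be.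
      (if snd (ct Ds a al be i r r') = k then fst (ct Ds a al be i r r') z p else 0) / Zf Ds 0 z * Dd a (min al be) z p)"
    by (simp add: sum_divide_distrib sum_distrib_right)
  also have "\<dots> = Nsum Ds a al be k z p"
    unfolding Nsum_def
  proof (intro sum.cong refl)
    fix i r r' assume i: "i \<in> {1..min al be}" and r: "r \<in> tuples a i al" and r': "r' \<in> tuples a i be"
    have i1: "1 \<le> i" "i \<le> min al be" "i \<le> n" using i al by auto
    have rin: "i < al \<Longrightarrow> r i \<in> {1..a i}" using r tuples_in by (metis atLeastLessThan_iff order_refl)
    have r'in: "i < be \<Longrightarrow> r' i \<in> {1..a i}" using r' tuples_in by (metis atLeastLessThan_iff order_refl)
    have z1: "i < al \<Longrightarrow> z \<noteq> p (i, r i) + 1" using zb[OF i1(3) rin] by blast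
    have z2: "i < be \<Longrightarrow> z \<noteq> shp i al r p (i, r' i)" using zb[OF i1(3) r'in] by (auto simp: shp_at)
    have z3: "Pp a (i - 1) p (z - 1) \<noteq> 0"
    proof -
      have "z - 1 - p (i - 1, u) \<noteq> 0" if "u \<in> {1..a (i - 1)}" for u
      proof -
        have "z \<noteq> p (i - 1, u) + 1" using zb[of "i - 1" u] that i1 by auto
        then show ?thesis by (simp add: diff_eq_eq)
      qed
      then show ?thesis unfolding Pp_def by (simp add: prod_zero_iff)
    qed
    show "(if snd (ct Ds a al be i r r') = k then fst (ct Ds a al be i r r') z p else 0) / Zf Ds 0 z * Dd a (min al be) z p
        = (if snd (ct Ds a al be i r r') = k then Ntm Ds a al be i r r' z p else 0)"
      using term_eq[OF a0 i1(1,2) r r' z0 z1 z2 z3] by simp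
  qed
  finally show ?thesis .
qed

end

lemma Dd_W: "Dd a m z p = (\<Prod>(l, u)\<in>Sigma {1..<m} (\<lambda>l. {1..a l}). z - (p (l, u) + 1))"
  unfolding Dd_def Pp_def by (subst prod.Sigma[symmetric]) (auto simp: algebra_simps)

lemma Zf0_finite: "finite {z. Zf Ds 0 z = 0}"
proof (rule finite_subset)
  show "{z. Zf Ds 0 z = 0} \<subseteq> (\<lambda>(i, g, y). y) ` set Ds"
  proof
    fix z assume "z \<in> {z. Zf Ds 0 z = 0}"
    then have "0 \<in> set (map (\<lambda>(i, g, x). if i = 0 then (z - x) powi g else 1) Ds)"
      unfolding Zf_def by (simp add: prod_list_zero_iff)
    then obtain i g y where "(i, g, y) \<in> set Ds" "(if i = 0 then (z - y) powi g else 1) = 0" by auto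
    then show "z \<in> (\<lambda>(i, g, y). y) ` set Ds" by (auto split: if_splits intro: image_eqI[where x="(i, g, y)"])
  qed
qed simp


theorem theorem2p22:
  fixes n :: nat and Ds :: divisor_pts and \<mu> :: "nat \<Rightarrow> int" and a :: "nat \<Rightarrow> nat"
  assumes n2: "n \<ge> 2"
    and pts: "\<forall>(i, g, x) \<in> set Ds. i \<le> n - 1 \<and> (g = 1 \<or> g = -1) \<and> (i \<noteq> 0 \<longrightarrow> g = 1)"
    and dom: "\<forall>i\<in>{1..<n}. \<mu> (Suc i) \<le> \<mu> i"
    and a0: "a 0 = 0" and an: "a n = 0"
    and integral: "\<forall>j\<in>{1..n}. lam Ds j + \<mu> j = int (a j) - int (a (j - 1))"
  shows "\<forall>\<alpha>\<in>{1..n}. \<forall>\<beta>\<in>{1..n}. \<forall>k :: shift. \<exists>cs. set cs \<subseteq> locring n a \<and>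
           (\<forall>p. generic n a p \<longrightarrow>
              finite {z. Tcoeff Ds a \<alpha> \<beta> k z p / Zf Ds 0 z \<noteq> (\<Sum>d<length cs. (cs ! d) p * z ^ d)})"
proof -
  have pts1: "\<forall>(i, g, x) \<in> set Ds. i \<noteq> 0 \<longrightarrow> g = 1" using pts by auto
  show ?thesis
  proof (intro ballI allI)
    fix \<alpha> \<beta> k assume \<alpha>: "\<alpha> \<in> {1..n}" and \<beta>: "\<beta> \<in> {1..n}"
    define m where "m = min \<alpha> \<beta>"
    have al: "\<alpha> \<le> n" "\<beta> \<le> n" using \<alpha> \<beta> by auto
    obtain P where P: "lcoeffs n a P" "\<forall>p. generic n a p \<longrightarrow> (\<forall>z. Nsum Ds a \<alpha> \<beta> k z p = ev P z p)"
      using lpoly_Nsum[OF a0 an pts1 al, of k] unfolding lpoly_def by blast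
    define W where "W = Sigma {1..<m} (\<lambda>l. {1..a l})"
    have Wf: "finite W" unfolding W_def by auto
    have Wsub: "W \<subseteq> {(l, u). 1 \<le> l \<and> l < n \<and> 1 \<le> u \<and> u \<le> a l}" unfolding W_def m_def using al by auto
    have roots: "\<forall>(l, u)\<in>W. \<forall>p. generic n a p \<longrightarrow> ev P (p (l, u) + 1) p = 0"
    proof (clarify)
      fix l u p assume lu: "(l, u) \<in> W" and g: "generic n a p"
      have "Nsum Ds a \<alpha> \<beta> k (p (l, u) + 1) p = 0"
        using lu unfolding W_def m_def by (intro Nsum_root[OF a0 an pts1 g al]) auto
      then show "ev P (p (l, u) + 1) p = 0" using P(2) g by simp
    qed
    obtain Q where Q: "lcoeffs n a Q" "\<forall>p. generic n a p \<longrightarrow> (\<forall>z. ev P z p = (\<Prod>(l, u)\<in>W. z - (p (l, u) + 1)) * ev Q z p)"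
      using div_roots[OF Wf Wsub P(1) roots] by blast
    have "lpoly n a (\<lambda>z p. ev Q z p)" unfolding lpoly_def using Q(1) by blast
    then obtain cs where cs: "set cs \<subseteq> locring n a"
        "\<forall>p. generic n a p \<longrightarrow> (\<forall>z. ev Q z p = (\<Sum>d<length cs. (cs ! d) p * z ^ d))"
      using lpoly_list by blast
    show "\<exists>cs. set cs \<subseteq> locring n a \<and> (\<forall>p. generic n a p \<longrightarrow>
              finite {z. Tcoeff Ds a \<alpha> \<beta> k z p / Zf Ds 0 z \<noteq> (\<Sum>d<length cs. (cs ! d) p * z ^ d)})"
    proof (intro exI conjI allI impI)
      show "set cs \<subseteq> locring n a" by (rule cs(1))
      fix p assume g: "generic n a p"
      define B where "B = {z. Zf Ds 0 z = 0} \<union> (\<Union>l\<in>{..n}. \<Union>u\<in>{1..a l}. {p (l, u), p (l, u) + 1})"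
      have "finite B" using Zf0_finite by (auto simp: B_def)
      moreover have "{z. Tcoeff Ds a \<alpha> \<beta> k z p / Zf Ds 0 z \<noteq> (\<Sum>d<length cs. (cs ! d) p * z ^ d)} \<subseteq> B"
      proof (rule subsetI, rule ccontr)
        fix z assume z: "z \<in> {z. Tcoeff Ds a \<alpha> \<beta> k z p / Zf Ds 0 z \<noteq> (\<Sum>d<length cs. (cs ! d) p * z ^ d)}" "z \<notin> B"
        have z0: "Zf Ds 0 z \<noteq> 0" using z(2) unfolding B_def by auto
        have zb: "\<And>l u. l \<le> n \<Longrightarrow> u \<in> {1..a l} \<Longrightarrow> z \<noteq> p (l, u) \<and> z \<noteq> p (l, u) + 1"
          using z(2) unfolding B_def by blast
        have e1: "Tcoeff Ds a \<alpha> \<beta> k z p / Zf Ds 0 z * Dd a m z p = Nsum Ds a \<alpha> \<beta> k z p"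
          unfolding m_def by (rule T_eq[where p=p and z=z and k=k, OF a0 an pts1 al z0 zb])
        have e2: "Nsum Ds a \<alpha> \<beta> k z p = Dd a m z p * ev Q z p"
          using P(2) Q(2) g by (simp add: Dd_W W_def)
        have Dnz: "Dd a m z p \<noteq> 0"
        proof -
          have "z - 1 - p (l, u) \<noteq> 0" if "l \<in> {1..<m}" "u \<in> {1..a l}" for l u
          proof -
            have "z \<noteq> p (l, u) + 1" using zb[of l u] that al m_def by auto
            then show ?thesis by (simp add: diff_eq_eq)
          qed
          then show ?thesis unfolding Dd_def Pp_def by (simp add: prod_zero_iff)
        qed
        have "Tcoeff Ds a \<alpha> \<beta> k z p / Zf Ds 0 z = ev Q z p"
          using e1 e2 Dnz by (metis mult.commute mult_cancel_left)
        then show False using z(1) cs(2) g by simp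
      qed
      ultimately show "finite {z. Tcoeff Ds a \<alpha> \<beta> k z p / Zf Ds 0 z \<noteq> (\<Sum>d<length cs. (cs ! d) p * z ^ d)}"
        by (rule finite_subset[rotated])
    qed
  qed
qed


end
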